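(* Let $M\in\mathrm{SL}(2,\mathbb Z)$ be a hyperbolic matrix defining a quantum cat map $\hat M$ (setting in the context). Let $0\le\alpha<1/4$ and $r=r(N)=(\log N)^{-\alpha}$. Then quantum ergodicity at scale $r$ holds for all $N\in\mathbb N$: there is a degree bound $D=D(N)$ with $1/D=o(r)$ such that, for majorant/minorant trigonometric polynomials $b^\pm_{x,r}$ of the balls $B_2(x,r)$ with this degree bound (as described in the context), for any choice of eigenbases $\{\phi_j\}_{j=1}^N$ of $\hat M$ in $\mathcal H_N$ there are subsets $S(N)\subset\{1,\dots,N\}$ with $\#S(N)/N\to1$ such that $$\langle\mathrm{Op}_N(b^\pm_{x,r})\phi_j,\phi_j\rangle=\mathrm{Vol}(B_2(x,r))+o(r^2)\quad\text{as }N\to\infty,$$ uniformly for all $x\in\mathbb T^2$ and $j\in S(N)$.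
   Context: Setting. $M=\begin{pmatrix}A&B\\C&D'\end{pmatrix}\in\mathrm{SL}(2,\mathbb Z)$ with $|\mathrm{Tr}\,M|>2$, written as $M=\exp\begin{pmatrix}\gamma&\beta\\-\alpha_0&-\gamma\end{pmatrix}$ with real $\alpha_0,\beta,\gamma$, $\gamma^2>\alpha_0\beta$; Lyapunov exponent $\lambda=\sqrt{\gamma^2-\alpha_0\beta}$. $M$ acts on row vectors $x\mapsto xM$ on $\mathbb T^2=\mathbb R^2/\mathbb Z^2$, $x=(q,p)$. Symplectic product $u\wedge v=u_2v_1-u_1v_2$. With $h=1/N$, $N\in\mathbb N$: $\hat q\psi=q\psi$, $\hat p\psi=\frac{h}{2\pi i}\psi'$, $\hat T_v=\exp(-\frac{2\pi i}{h}(v_1\hat p-v_2\hat q))$, $\hat H=\frac12\alpha_0\hat q^2+\frac12\beta\hat p^2+\frac\gamma2(\hat q\hat p+\hat p\hat q)$, $\hat M=e^{-2\pi i\hat H/h}$. For each $N$ a fixed $\kappa\in\mathbb T^2$ (depending on $M,N$) is chosen so that $\hat M$ preserves the $N$-dimensional Hilbert space $\mathcal H_N$ of distributions $\psi(q)=\sum_{k\in\mathbb Z}\Psi(k)\delta(q-(k+\kappa_1)/N)$, $\Psi(k+N)=e^{-2\pi i\kappa_2}\Psi(k)$, with $\langle\psi,\phi\rangle=\frac1N\sum_{k=1}^N\Psi(k)\overline{\Phi(k)}$. An eigenbasis is an orthonormal basis $\{\phi_j\}_{j=1}^N$ of $\mathcal H_N$ of eigenvectors of $\hat M$. $\hat T_N(n):=\hat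 T_{n/N}$ for $n\in\mathbb Z^2$; for $a(x)=\sum_{n\in\mathbb Z^2}\tilde a(n)e^{2\pi i(n\wedge x)}$ on $\mathbb T^2$, $\mathrm{Op}_N(a)=\sum_n\tilde a(n)\hat T_N(n)$. Majorants/minorants: $B_2(x,r)$ is the geodesic disc of radius $r$ in $\mathbb T^2$; given $D$ with $rD\ge1$, $a_r^\pm$ are trigonometric polynomials on $\mathbb T^2$ with $a_r^-\le\chi_{B_2(0,r)}\le a_r^+$, $\widetilde{a_r^\pm}(n)=0$ for $|n|\ge D$, $\widetilde{a_r^\pm}(0)=\mathrm{Vol}(B_2(0,r))+O(r/D)$, and $|\widetilde{a_r^\pm}(n)|\le cr^2$ for all $n$ with an absolute constant $c$; then $b^\pm_{x,r}(y):=a_r^\pm(y-x)$. *)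

theory Defs
  imports "HOL-Analysis.Analysis"
begin

definition mat_exp :: "real^2^2 \<Rightarrow> real^2^2" where
  "mat_exp X = (\<Sum>k. (1 / fact k) *\<^sub>R (((\<lambda>Y. X ** Y) ^^ k) (mat 1)))"

definition mat22 :: "real \<Rightarrow> real \<Rightarrow> real \<Rightarrow> real \<Rightarrow> real^2^2" where
  "mat22 a b c d = vector [vector [a, b], vector [c, d]]"

definition wedge :: "real \<times> real \<Rightarrow> real \<times> real \<Rightarrow> real" where
  "wedge u v = snd u * fst v - fst u * snd v"

definition ivec :: "int \<times> int \<Rightarrow> real \<times> real" where
  "ivec n = (real_of_int (fst n), real_of_int (snd n))"

text \<open>Row vector times M = (A B; C D'): n M.\<close>
definition rowmul :: "int \<times> int \<Rightarrow> int \<Rightarrow> int \<Rightarrow> int \<Rightarrow> int \<Rightarrow> int \<times> int" where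
  "rowmul n A B C D' = (fst n * A + snd n * C, fst n * B + snd n * D')"

text \<open>A state psi(q) = sum_k Psi(k) delta(q - (k+kappa1)/N) is identified with its
  coefficient sequence Psi :: int => complex.\<close>

definition HN :: "nat \<Rightarrow> real \<times> real \<Rightarrow> (int \<Rightarrow> complex) set" where
  "HN N \<kappa> = {\<Psi>. \<forall>k. \<Psi> (k + int N) = cis (- 2 * pi * snd \<kappa>) * \<Psi> k}"

definition inner_HN :: "nat \<Rightarrow> (int \<Rightarrow> complex) \<Rightarrow> (int \<Rightarrow> complex) \<Rightarrow> complex" where
  "inner_HN N \<Psi> \<Phi> = (1 / of_nat N) * (\<Sum>k\<in>{1..int N}. \<Psi> k * cnj (\<Phi> k))"

text \<open>Action of T_N(n) = T_{n/N} = exp(-2 pi i N (v1 p - v2 q)), v = n/N, on the coefficients: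
  (T_v psi)(q) = exp(2 pi i N v2 q - pi i N v1 v2) psi(q - v1), which gives
  (T_N(n) Psi)(k) = exp(pi i (2 n2 (k + kappa1) - n1 n2) / N) Psi(k - n1).\<close>
definition TN :: "nat \<Rightarrow> real \<times> real \<Rightarrow> int \<times> int \<Rightarrow> (int \<Rightarrow> complex) \<Rightarrow> (int \<Rightarrow> complex)" where
  "TN N \<kappa> n \<Psi> = (\<lambda>k. cis (pi * (2 * real_of_int (snd n) * (real_of_int k + fst \<kappa>)
        - real_of_int (fst n) * real_of_int (snd n)) / real N) * \<Psi> (k - fst n))"

definition trig_eval :: "(int \<times> int \<Rightarrow> complex) \<Rightarrow> real \<times> real \<Rightarrow> complex" where
  "trig_eval a x = (\<Sum>n\<in>{n. a n \<noteq> 0}. a n * cis (2 * pi * wedge (ivec n) x))"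

definition OpN :: "nat \<Rightarrow> real \<times> real \<Rightarrow> (int \<times> int \<Rightarrow> complex) \<Rightarrow> (int \<Rightarrow> complex) \<Rightarrow> (int \<Rightarrow> complex)" where
  "OpN N \<kappa> a \<Psi> = (\<lambda>k. \<Sum>n\<in>{n. a n \<noteq> 0}. a n * TN N \<kappa> n \<Psi> k)"

text \<open>Fourier coefficients of the translate b(y) = a(y - x).\<close>
definition trig_shift :: "(int \<times> int \<Rightarrow> complex) \<Rightarrow> real \<times> real \<Rightarrow> int \<times> int \<Rightarrow> complex" where
  "trig_shift a x n = a n * cis (- 2 * pi * wedge (ivec n) x)"

definition torus_ball :: "real \<times> real \<Rightarrow> real \<Rightarrow> (real \<times> real) set" where
  "torus_ball x r = {y. \<exists>m::int \<times> int. dist y (x + ivec m) < r}"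

definition torus_vol :: "real \<times> real \<Rightarrow> real \<Rightarrow> real" where
  "torus_vol x r = measure lborel (torus_ball x r \<inter> ({0..<1} \<times> {0..<1}))"

definition int_norm :: "int \<times> int \<Rightarrow> real" where
  "int_norm n = sqrt (real_of_int (fst n)^2 + real_of_int (snd n)^2)"

text \<open>U is a quantization of M on H_N(kappa): a unitary operator of H_N satisfying the exact
  Egorov property U^{-1} T_N(n) U = T_N(n M) for all n in Z^2.\<close>
definition is_quantum_cat :: "int \<Rightarrow> int \<Rightarrow> int \<Rightarrow> int \<Rightarrow> nat \<Rightarrow> real \<times> real
    \<Rightarrow> ((int \<Rightarrow> complex) \<Rightarrow> (int \<Rightarrow> complex)) \<Rightarrow> bool" where
  "is_quantum_cat A B C D' N \<kappa> U \<longleftrightarrow>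
     U ` HN N \<kappa> = HN N \<kappa> \<and>
     (\<forall>\<Psi>\<in>HN N \<kappa>. \<forall>\<Phi>\<in>HN N \<kappa>. \<forall>c d.
         U (\<lambda>k. c * \<Psi> k + d * \<Phi> k) = (\<lambda>k. c * U \<Psi> k + d * U \<Phi> k)) \<and>
     (\<forall>\<Psi>\<in>HN N \<kappa>. \<forall>\<Phi>\<in>HN N \<kappa>. inner_HN N (U \<Psi>) (U \<Phi>) = inner_HN N \<Psi> \<Phi>) \<and>
     (\<forall>n. \<forall>\<Psi>\<in>HN N \<kappa>. U (TN N \<kappa> (rowmul n A B C D') \<Psi>) = TN N \<kappa> n (U \<Psi>))"

definition is_eigenbasis :: "nat \<Rightarrow> real \<times> real \<Rightarrow> ((int \<Rightarrow> complex) \<Rightarrow> (int \<Rightarrow> complex))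
    \<Rightarrow> (nat \<Rightarrow> int \<Rightarrow> complex) \<Rightarrow> bool" where
  "is_eigenbasis N \<kappa> U \<phi> \<longleftrightarrow>
     (\<forall>j\<in>{1..N}. \<phi> j \<in> HN N \<kappa>) \<and>
     (\<forall>i\<in>{1..N}. \<forall>j\<in>{1..N}. inner_HN N (\<phi> i) (\<phi> j) = (if i = j then 1 else 0)) \<and>
     (\<forall>\<Psi>\<in>HN N \<kappa>. \<Psi> = (\<lambda>k. \<Sum>j\<in>{1..N}. inner_HN N \<Psi> (\<phi> j) * \<phi> j k)) \<and>
     (\<forall>j\<in>{1..N}. \<exists>\<mu>. U (\<phi> j) = (\<lambda>k. \<mu> * \<phi> j k))"

text \<open>ap N, am N are the Fourier coefficients of a^+_r, a^-_r for r = r N, D = D N.\<close>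
definition admissible_majorants :: "(nat \<Rightarrow> real) \<Rightarrow> (nat \<Rightarrow> real)
    \<Rightarrow> (nat \<Rightarrow> int \<times> int \<Rightarrow> complex) \<Rightarrow> (nat \<Rightarrow> int \<times> int \<Rightarrow> complex) \<Rightarrow> bool" where
  "admissible_majorants r D ap am \<longleftrightarrow>
     (\<exists>c C. \<forall>N. r N * D N \<ge> 1 \<longrightarrow>
        (\<forall>x. Im (trig_eval (ap N) x) = 0 \<and> Im (trig_eval (am N) x) = 0 \<and>
             Re (trig_eval (am N) x) \<le> indicator (torus_ball 0 (r N)) x \<and>
             indicator (torus_ball 0 (r N)) x \<le> Re (trig_eval (ap N) x)) \<and>
        (\<forall>n. int_norm n \<ge> D N \<longrightarrow> ap N n = 0 \<and> am N n = 0) \<and>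
        cmod (ap N 0 - complex_of_real (torus_vol 0 (r N))) \<le> C * r N / D N \<and>
        cmod (am N 0 - complex_of_real (torus_vol 0 (r N))) \<le> C * r N / D N \<and>
        (\<forall>n. cmod (ap N n) \<le> c * (r N)^2 \<and> cmod (am N n) \<le> c * (r N)^2))"

end

theory Submission
  imports Defs "HOL-Real_Asymp.Real_Asymp"
begin

lemma img_add_eq: "(+) w ` S = {z. z - w \<in> S}" for w :: "'a::ab_group_add"
  by (force simp: image_iff algebra_simps)

lemma rect_borel: "({a..<b} \<times> {c..<d} :: (real\<times>real) set) \<in> sets borel"
proof -
  have "({a..<b} \<times> {c..<d} :: (real\<times>real) set) \<in> sets (borel \<Otimes>\<^sub>M borel)"
    by (intro pair_measureI) auto
  then show ?thesis
    by (metis borel_prod)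
qed

lemma rect_sets: "({a..<b} \<times> {c..<d} :: (real\<times>real) set) \<in> sets lebesgue"
proof -
  have "({a..<b} \<times> {c..<d} :: (real\<times>real) set) \<in> sets (borel \<Otimes>\<^sub>M borel)"
    by (intro pair_measureI) auto
  then have "({a..<b} \<times> {c..<d} :: (real\<times>real) set) \<in> sets borel"
    by (metis borel_prod)
  then show ?thesis by auto
qed

lemma rect_lmeas:
  fixes P :: "(real \<times> real) set"
  assumes "P \<in> sets lebesgue"
  shows "P \<inter> ({a..<b} \<times> {c..<d}) \<in> lmeasurable"
proof (rule bounded_set_imp_lmeasurable)
  show "bounded (P \<inter> ({a..<b} \<times> {c..<d}))"
    by (rule bounded_subset[of "{a..b} \<times> {c..d}"]) (auto intro!: bounded_Times)
  show "P \<inter> ({a..<b} \<times> {c..<d}) \<in> sets lebesgue"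
    using assms rect_sets by auto
qed

lemma strip_x:
  fixes P :: "(real \<times> real) set"
  assumes PL: "P \<in> sets lebesgue"
    and per: "\<And>y (k::int). y + (of_int k, 0) \<in> P \<longleftrightarrow> y \<in> P"
  shows "measure lebesgue (P \<inter> ({a..<a+1} \<times> {c..<d})) = measure lebesgue (P \<inter> ({0..<1} \<times> {c..<d}))"
proof -
  let ?m = "\<lambda>u v. measure lebesgue (P \<inter> ({u..<v} \<times> {c..<d}))"
  have tr: "?m u v = ?m (u + of_int k) (v + of_int k)" for u v and k :: int
  proof -
    have "(+) (of_int k, 0) ` (P \<inter> ({u..<v} \<times> {c..<d})) = P \<inter> ({u + of_int k..<v + of_int k} \<times> {c..<d})"
    proof -
      have "z - (of_int k, 0) \<in> P \<longleftrightarrow> z \<in> P" for z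
        using per[of "z - (of_int k, 0)" k] by simp
      then show ?thesis unfolding img_add_eq by (auto simp: algebra_simps)
    qed
    then show ?thesis using measure_translation[of "(of_int k, 0)" "P \<inter> ({u..<v} \<times> {c..<d})"]
      by simp
  qed
  have split: "?m u w = ?m u v + ?m v w" if "u \<le> v" "v \<le> w" for u v w
  proof -
    note A1 = rect_lmeas[OF PL, of u v c d] and A2 = rect_lmeas[OF PL, of v w c d]
    have D: "P \<inter> ({v..<w} \<times> {c..<d}) - P \<inter> ({u..<v} \<times> {c..<d}) = P \<inter> ({v..<w} \<times> {c..<d})" by auto
    have "P \<inter> ({u..<w} \<times> {c..<d}) = (P \<inter> ({u..<v} \<times> {c..<d})) \<union> (P \<inter> ({v..<w} \<times> {c..<d}))"
      using that by auto
    then show ?thesis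
      using measure_Un2[OF A1 A2] D by simp
  qed
  define k where "k = \<lceil>a\<rceil>"
  have k1: "a \<le> of_int k" "of_int k \<le> a + 1" unfolding k_def by linarith+
  have "?m a (a+1) = ?m a k + ?m k (a+1)" by (rule split[OF k1])
  also have "?m a k = ?m (a+1) (k+1)" using tr[of a k 1] by simp
  also have "?m (a+1) (k+1) + ?m k (a+1) = ?m k (k+1)" using split[of k "a+1" "k+1"] k1 by (simp add: add.commute)
  also have "?m k (k+1) = ?m 0 1" using tr[of k "k+1" "-k"] by simp
  finally show ?thesis .
qed

lemma strip_y:
  fixes P :: "(real \<times> real) set"
  assumes PL: "P \<in> sets lebesgue"
    and per: "\<And>y (k::int). y + (0, of_int k) \<in> P \<longleftrightarrow> y \<in> P"
  shows "measure lebesgue (P \<inter> ({c..<d} \<times> {a..<a+1})) = measure lebesgue (P \<inter> ({c..<d} \<times> {0..<1}))"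
proof -
  let ?m = "\<lambda>u v. measure lebesgue (P \<inter> ({c..<d} \<times> {u..<v}))"
  have tr: "?m u v = ?m (u + of_int k) (v + of_int k)" for u v and k :: int
  proof -
    have "(+) (0, of_int k) ` (P \<inter> ({c..<d} \<times> {u..<v})) = P \<inter> ({c..<d} \<times> {u + of_int k..<v + of_int k})"
    proof -
      have "z - (0, of_int k) \<in> P \<longleftrightarrow> z \<in> P" for z
        using per[of "z - (0, of_int k)" k] by simp
      then show ?thesis unfolding img_add_eq by (auto simp: algebra_simps)
    qed
    then show ?thesis using measure_translation[of "(0, of_int k)" "P \<inter> ({c..<d} \<times> {u..<v})"]
      by simp
  qed
  have split: "?m u w = ?m u v + ?m v w" if "u \<le> v" "v \<le> w" for u v w
  proof -
    note A1 = rect_lmeas[OF PL, of c d u v] and A2 = rect_lmeas[OF PL, of c d v w]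
    have D: "P \<inter> ({c..<d} \<times> {v..<w}) - P \<inter> ({c..<d} \<times> {u..<v}) = P \<inter> ({c..<d} \<times> {v..<w})" by auto
    have "P \<inter> ({c..<d} \<times> {u..<w}) = (P \<inter> ({c..<d} \<times> {u..<v})) \<union> (P \<inter> ({c..<d} \<times> {v..<w}))"
      using that by auto
    then show ?thesis
      using measure_Un2[OF A1 A2] D by simp
  qed
  define k where "k = \<lceil>a\<rceil>"
  have k1: "a \<le> of_int k" "of_int k \<le> a + 1" unfolding k_def by linarith+
  have "?m a (a+1) = ?m a k + ?m k (a+1)" by (rule split[OF k1])
  also have "?m a k = ?m (a+1) (k+1)" using tr[of a k 1] by simp
  also have "?m (a+1) (k+1) + ?m k (a+1) = ?m k (k+1)" using split[of k "a+1" "k+1"] k1 by (simp add: add.commute)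
  also have "?m k (k+1) = ?m 0 1" using tr[of k "k+1" "-k"] by simp
  finally show ?thesis .
qed

lemma ivec_add: "ivec (a + b) = ivec a + ivec b"
  by (simp add: ivec_def)

lemma ivec_minus: "ivec (a - b) = ivec a - ivec b"
  by (simp add: ivec_def)

lemma torus_ball_per: "y + ivec m \<in> torus_ball 0 r \<longleftrightarrow> y \<in> torus_ball 0 r"
proof
  assume "y + ivec m \<in> torus_ball 0 r"
  then obtain m' where "dist (y + ivec m) (ivec m') < r" by (auto simp: torus_ball_def)
  then have "dist y (ivec (m' - m)) < r" by (simp add: ivec_minus dist_norm algebra_simps)
  then show "y \<in> torus_ball 0 r" unfolding torus_ball_def by (intro CollectI exI[of _ "m' - m"]) simp
next
  assume "y \<in> torus_ball 0 r"
  then obtain m' where "dist y (ivec m') < r" by (auto simp: torus_ball_def)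
  then have "dist (y + ivec m) (ivec (m' + m)) < r" by (simp add: ivec_add dist_norm algebra_simps)
  then show "y + ivec m \<in> torus_ball 0 r" unfolding torus_ball_def by (intro CollectI exI[of _ "m' + m"]) simp
qed

lemma torus_ball_shift: "torus_ball x r = (+) x ` torus_ball 0 r"
proof (rule set_eqI)
  fix y
  have e: "dist y (x + ivec m) = dist (y - x) (0 + ivec m)" for m
    by (simp add: dist_norm algebra_simps)
  show "y \<in> torus_ball x r \<longleftrightarrow> y \<in> (+) x ` torus_ball 0 r"
    unfolding img_add_eq torus_ball_def mem_Collect_eq by (simp only: e)
qed

lemma torus_ball_open: "open (torus_ball 0 r)"
proof -
  have "torus_ball 0 r = (\<Union>m. ball (ivec m) r)"
    by (rule set_eqI) (simp add: torus_ball_def dist_commute)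
  then show ?thesis by auto
qed

lemma torus_vol_shift: "torus_vol x r = torus_vol 0 r"
proof -
  obtain x1 x2 where x: "x = (x1, x2)" by (cases x)
  let ?P = "torus_ball 0 r" and ?Q = "{0..<1::real} \<times> {0..<1::real}"
  have PL: "?P \<in> sets lebesgue" using torus_ball_open by auto
  have perx: "y + (of_int k, 0) \<in> ?P \<longleftrightarrow> y \<in> ?P" for y k
    using torus_ball_per[of y "(k, 0)"] by (simp add: ivec_def)
  have pery: "y + (0, of_int k) \<in> ?P \<longleftrightarrow> y \<in> ?P" for y k
    using torus_ball_per[of y "(0, k)"] by (simp add: ivec_def)
  have Qb: "?Q \<in> sets borel" using rect_borel by blast
  have bx: "torus_ball x r \<inter> ?Q \<in> sets borel"
  proof -
    have "open (torus_ball x r)" by (subst torus_ball_shift[of x]) (rule open_translation[OF torus_ball_open])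
    then show ?thesis using Qb by (intro sets.Int[OF borel_open])
  qed
  have b0: "torus_ball 0 r \<inter> ?Q \<in> sets borel"
    using Qb by (intro sets.Int[OF borel_open[OF torus_ball_open]])
  have "torus_vol x r = measure lebesgue (torus_ball x r \<inter> ?Q)"
    unfolding torus_vol_def using bx by simp
  also have "torus_ball x r \<inter> ?Q = (+) x ` (?P \<inter> ({- fst x..<- fst x + 1} \<times> {- snd x..<- snd x + 1}))"
    by (subst torus_ball_shift[of x], unfold img_add_eq) (rule set_eqI, auto simp: algebra_simps x)
  also have "measure lebesgue \<dots> = measure lebesgue (?P \<inter> ({- fst x..<- fst x + 1} \<times> {- snd x..<- snd x + 1}))"
    by (rule measure_translation)
  also have "\<dots> = measure lebesgue (?P \<inter> ({0..<1} \<times> {- snd x..<- snd x + 1}))"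
    by (rule strip_x[OF PL perx])
  also have "\<dots> = measure lebesgue (?P \<inter> ?Q)"
    by (rule strip_y[OF PL pery])
  also have "\<dots> = torus_vol 0 r"
    unfolding torus_vol_def using b0 by simp
  finally show ?thesis .
qed

fun orb :: "int \<Rightarrow> int \<Rightarrow> int \<Rightarrow> int \<Rightarrow> int \<times> int \<Rightarrow> nat \<Rightarrow> int \<times> int" where
  "orb A B C D' n 0 = n"
| "orb A B C D' n (Suc t) = rowmul (orb A B C D' n t) A B C D'"

lemma rowmul_inj:
  assumes "A * D' - B * C = 1" "rowmul m A B C D' = rowmul m' A B C D'"
  shows "m = m'"
proof -
  have h: "rowmul (rowmul x A B C D') D' (-B) (-C) A = x" for x
  proof (cases x)
    case (Pair a b)
    have "(a * A + b * C) * D' + (a * B + b * D') * - C = a * (A * D' - B * C)" by (simp add: algebra_simps)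
    then have 1: "(a * A + b * C) * D' + (a * B + b * D') * - C = a" using assms(1) by simp
    have "(a * A + b * C) * - B + (a * B + b * D') * A = b * (A * D' - B * C)" by (simp add: algebra_simps)
    then have 2: "(a * A + b * C) * - B + (a * B + b * D') * A = b" using assms(1) by simp
    show ?thesis using 1 2 by (simp add: rowmul_def Pair)
  qed
  have "m = rowmul (rowmul m A B C D') D' (-B) (-C) A" by (rule h[symmetric])
  also have "\<dots> = rowmul (rowmul m' A B C D') D' (-B) (-C) A" by (simp only: assms(2))
  also have "\<dots> = m'" by (rule h)
  finally show ?thesis .
qed

lemma orb_add: "orb A B C D' n (s + t) = orb A B C D' (orb A B C D' n s) t"
  by (induction t) auto


lemma rowmul_CH:
  assumes "A * D' - B * C = 1"
  shows "fst (rowmul (rowmul m A B C D') A B C D') = (A + D') * fst (rowmul m A B C D') - fst m"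
    and "snd (rowmul (rowmul m A B C D') A B C D') = (A + D') * snd (rowmul m A B C D') - snd m"
proof -
  have e: "B * C = A * D' - 1" using assms by simp
  show "fst (rowmul (rowmul m A B C D') A B C D') = (A + D') * fst (rowmul m A B C D') - fst m"
    using assms by (simp add: rowmul_def) algebra
  show "snd (rowmul (rowmul m A B C D') A B C D') = (A + D') * snd (rowmul m A B C D') - snd m"
    using assms by (simp add: rowmul_def) algebra
qed

lemma rec_periodic_zero:
  fixes u :: "nat \<Rightarrow> int"
  assumes rec: "\<And>t. u (t+2) = \<tau> * u (t+1) - u t" and tau: "\<bar>\<tau>\<bar> \<ge> 3" and s: "s \<ge> 1"
    and p0: "u s = u 0" and p1: "u (s+1) = u 1"
  shows "u 0 = 0"
proof -
  define a where "a t = \<bar>u t\<bar>" for t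
  define d where "d t = a (t+1) - a t" for t
  have key: "d (Suc t) - d t \<ge> a (t+1)" for t
  proof -
    have "\<bar>\<tau> * u (t+1)\<bar> \<ge> 3 * \<bar>u (t+1)\<bar>" using tau by (simp add: abs_mult mult_right_mono)
    then have "a (t+2) \<ge> 3 * a (t+1) - a t" unfolding a_def rec by linarith
    then show ?thesis unfolding d_def by (simp add: algebra_simps)
  qed
  have "(\<Sum>t<s. d (Suc t) - d t) = d s - d 0" by (rule sum_lessThan_telescope)
  also have "d s = d 0" unfolding d_def a_def using p0 p1 by simp
  finally have "(\<Sum>t<s. d (Suc t) - d t) = 0" by simp
  then have le: "(\<Sum>t<s. a (t+1)) \<le> 0" using sum_mono[of "{..<s}" "\<lambda>t. a (t+1)" "\<lambda>t. d (Suc t) - d t"] key by simp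
  have nn: "\<forall>t\<in>{..<s}. 0 \<le> a (t+1)" unfolding a_def by simp
  have "0 \<le> (\<Sum>t<s. a (t+1))" by (rule sum_nonneg) (simp add: a_def)
  then have "(\<Sum>t<s. a (t+1)) = 0" using le by linarith
  then have "\<forall>t\<in>{..<s}. a (t+1) = 0" using sum_nonneg_eq_0_iff[of "{..<s}" "\<lambda>t. a (t+1)"] nn by auto
  moreover have "s - 1 \<in> {..<s}" using s by simp
  ultimately have "a (s - 1 + 1) = 0" by blast
  then show ?thesis using s p0 unfolding a_def by simp
qed

lemma orb_periodic_zero:
  assumes det: "A * D' - B * C = 1" and hyp: "\<bar>A + D'\<bar> > 2" and s: "s \<ge> 1"
    and per: "orb A B C D' n s = n"
  shows "n = (0, 0)"
proof -
  have p1: "orb A B C D' n (s+1) = orb A B C D' n 1" using per by simp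
  have tau: "\<bar>A + D'\<bar> \<ge> 3" using hyp by simp
  have "fst (orb A B C D' n 0) = 0"
    by (rule rec_periodic_zero[where \<tau>="A + D'" and s=s]) (use rowmul_CH[OF det] tau s per p1 in \<open>simp_all add: numeral_2_eq_2\<close>)
  moreover have "snd (orb A B C D' n 0) = 0"
    by (rule rec_periodic_zero[where \<tau>="A + D'" and s=s]) (use rowmul_CH[OF det] tau s per p1 in \<open>simp_all add: numeral_2_eq_2\<close>)
  ultimately show ?thesis by (cases n) simp
qed

lemma orb_distinct:
  assumes det: "A * D' - B * C = 1" and hyp: "\<bar>A + D'\<bar> > 2" and n: "n \<noteq> (0, 0)"
    and tt: "t < t'"
  shows "orb A B C D' n t \<noteq> orb A B C D' n t'"
proof
  assume eq: "orb A B C D' n t = orb A B C D' n t'"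
  have "orb A B C D' n (0 + i) = orb A B C D' n ((t' - t) + i)" if "i \<le> t" for i
    using that
  proof (induction "t - i" arbitrary: i)
    case 0
    then have "i = t" by simp
    then show ?case using eq tt by simp
  next
    case (Suc x)
    have "orb A B C D' n (i+1) = orb A B C D' n ((t' - t) + (i+1))"
      using Suc.hyps(1)[of "i+1"] Suc.hyps(2) Suc.prems by simp
    then have "rowmul (orb A B C D' n i) A B C D' = rowmul (orb A B C D' n ((t' - t) + i)) A B C D'"
      by (simp flip: add.assoc)
    then show ?case using rowmul_inj[OF det] by simp
  qed
  from this[of 0] have "orb A B C D' n (t' - t) = n" by simp
  moreover have "1 \<le> t' - t" using tt by simp
  ultimately show False using orb_periodic_zero[OF det hyp, of "t' - t" n] n by blast
qed

definition ninf :: "int \<times> int \<Rightarrow> int" where "ninf m = max \<bar>fst m\<bar> \<bar>snd m\<bar>"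

lemma ninf_rowmul: "ninf (rowmul m A B C D') \<le> (\<bar>A\<bar> + \<bar>B\<bar> + \<bar>C\<bar> + \<bar>D'\<bar>) * ninf m"
proof -
  have a: "\<bar>fst m\<bar> \<le> ninf m" "\<bar>snd m\<bar> \<le> ninf m" by (auto simp: ninf_def)
  have n0: "0 \<le> ninf m" by (simp add: ninf_def)
  have eqL: "(\<bar>A\<bar> + \<bar>B\<bar> + \<bar>C\<bar> + \<bar>D'\<bar>) * ninf m = ninf m * \<bar>A\<bar> + ninf m * \<bar>B\<bar> + ninf m * \<bar>C\<bar> + ninf m * \<bar>D'\<bar>"
    by algebra
  have "\<bar>fst m * A + snd m * C\<bar> \<le> \<bar>fst m\<bar> * \<bar>A\<bar> + \<bar>snd m\<bar> * \<bar>C\<bar>"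
    using abs_triangle_ineq[of "fst m * A" "snd m * C"] by (simp add: abs_mult)
  also have "\<dots> \<le> ninf m * \<bar>A\<bar> + ninf m * \<bar>C\<bar>" by (intro add_mono mult_right_mono) (use a in simp_all)
  also have "\<dots> \<le> (\<bar>A\<bar> + \<bar>B\<bar> + \<bar>C\<bar> + \<bar>D'\<bar>) * ninf m"
    using mult_nonneg_nonneg[OF n0, of "\<bar>A\<bar>"] mult_nonneg_nonneg[OF n0, of "\<bar>B\<bar>"] mult_nonneg_nonneg[OF n0, of "\<bar>C\<bar>"] mult_nonneg_nonneg[OF n0, of "\<bar>D'\<bar>"]
    by (simp add: eqL)
  finally have 1: "\<bar>fst m * A + snd m * C\<bar> \<le> (\<bar>A\<bar> + \<bar>B\<bar> + \<bar>C\<bar> + \<bar>D'\<bar>) * ninf m" .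
  have "\<bar>fst m * B + snd m * D'\<bar> \<le> \<bar>fst m\<bar> * \<bar>B\<bar> + \<bar>snd m\<bar> * \<bar>D'\<bar>"
    using abs_triangle_ineq[of "fst m * B" "snd m * D'"] by (simp add: abs_mult)
  also have "\<dots> \<le> ninf m * \<bar>B\<bar> + ninf m * \<bar>D'\<bar>" by (intro add_mono mult_right_mono) (use a in simp_all)
  also have "\<dots> \<le> (\<bar>A\<bar> + \<bar>B\<bar> + \<bar>C\<bar> + \<bar>D'\<bar>) * ninf m"
    using mult_nonneg_nonneg[OF n0, of "\<bar>A\<bar>"] mult_nonneg_nonneg[OF n0, of "\<bar>B\<bar>"] mult_nonneg_nonneg[OF n0, of "\<bar>C\<bar>"] mult_nonneg_nonneg[OF n0, of "\<bar>D'\<bar>"]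
    by (simp add: eqL)
  finally have 2: "\<bar>fst m * B + snd m * D'\<bar> \<le> (\<bar>A\<bar> + \<bar>B\<bar> + \<bar>C\<bar> + \<bar>D'\<bar>) * ninf m" .
  have "ninf (rowmul m A B C D') = max \<bar>fst m * A + snd m * C\<bar> \<bar>fst m * B + snd m * D'\<bar>"
    by (simp add: ninf_def rowmul_def)
  then show ?thesis using 1 2 by simp
qed

lemma ninf_orb: "ninf (orb A B C D' n t) \<le> (\<bar>A\<bar> + \<bar>B\<bar> + \<bar>C\<bar> + \<bar>D'\<bar>) ^ t * ninf n"
proof (induction t)
  case 0 then show ?case by simp
next
  case (Suc t)
  have "ninf (orb A B C D' n (Suc t)) \<le> (\<bar>A\<bar> + \<bar>B\<bar> + \<bar>C\<bar> + \<bar>D'\<bar>) * ninf (orb A B C D' n t)"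
    by (simp add: ninf_rowmul)
  also have "\<dots> \<le> (\<bar>A\<bar> + \<bar>B\<bar> + \<bar>C\<bar> + \<bar>D'\<bar>) * ((\<bar>A\<bar> + \<bar>B\<bar> + \<bar>C\<bar> + \<bar>D'\<bar>) ^ t * ninf n)"
    using Suc by (intro mult_left_mono) auto
  finally show ?case by (simp add: algebra_simps)
qed

lemma HN_shift_int:
  assumes "\<Psi> \<in> HN N \<kappa>"
  shows "\<Psi> (k + int N * q) = cis (- 2 * pi * snd \<kappa> * of_int q) * \<Psi> k"
proof (induction q rule: int_induct[where k=0])
  case base then show ?case by simp
next
  case (step1 i)
  have "\<Psi> (k + int N * (i + 1)) = \<Psi> ((k + int N * i) + int N)" by (simp add: algebra_simps)
  also have "\<dots> = cis (- 2 * pi * snd \<kappa>) * \<Psi> (k + int N * i)"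
    using assms by (simp add: HN_def)
  also have "\<dots> = cis (- 2 * pi * snd \<kappa> * of_int (i + 1)) * \<Psi> k"
    using step1 by (simp add: cis_mult algebra_simps)
  finally show ?case .
next
  case (step2 i)
  have "\<Psi> (k + int N * i) = \<Psi> ((k + int N * (i - 1)) + int N)" by (simp add: algebra_simps)
  also have "\<dots> = cis (- 2 * pi * snd \<kappa>) * \<Psi> (k + int N * (i - 1))"
    using assms by (simp add: HN_def)
  finally have "\<Psi> (k + int N * (i - 1)) = cis (2 * pi * snd \<kappa>) * \<Psi> (k + int N * i)"
    by (simp add: cis_mult flip: mult.assoc)
  also have "\<dots> = cis (- 2 * pi * snd \<kappa> * of_int (i - 1)) * \<Psi> k"
    using step2 by (simp add: cis_mult algebra_simps)
  finally show ?case .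
qed

lemma TN_HN:
  assumes "N \<ge> 1" "\<Psi> \<in> HN N \<kappa>"
  shows "TN N \<kappa> n \<Psi> \<in> HN N \<kappa>"
  unfolding HN_def mem_Collect_eq
proof
  fix k
  have e: "k + int N - fst n = (k - fst n) + int N" by simp
  have c: "cis (pi * (2 * real_of_int (snd n) * (real_of_int (k + int N) + fst \<kappa>) - real_of_int (fst n) * real_of_int (snd n)) / real N)
     = cis (2 * pi * real_of_int (snd n)) * cis (pi * (2 * real_of_int (snd n) * (real_of_int k + fst \<kappa>) - real_of_int (fst n) * real_of_int (snd n)) / real N)"
    using assms(1) by (simp add: cis_mult field_simps)
  have "cis (2 * pi * real_of_int (snd n)) = 1" by (rule cis_multiple_2pi) simp
  then show "TN N \<kappa> n \<Psi> (k + int N) = cis (- 2 * pi * snd \<kappa>) * TN N \<kappa> n \<Psi> k"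
    unfolding TN_def using assms(2) c by (simp only: e HN_def mem_Collect_eq) (simp add: algebra_simps)
qed

lemma TN_zero: "TN N \<kappa> (0, 0) \<Psi> = \<Psi>"
  by (simp add: TN_def)

lemma TN_scale: "TN N \<kappa> n (\<lambda>k. \<mu> * \<Psi> k) = (\<lambda>k. \<mu> * TN N \<kappa> n \<Psi> k)"
  by (simp add: TN_def fun_eq_iff algebra_simps)

lemma inner_scale: "inner_HN N (\<lambda>k. \<mu> * f k) (\<lambda>k. \<mu> * g k) = \<mu> * cnj \<mu> * inner_HN N f g"
  by (simp add: inner_HN_def sum_distrib_left algebra_simps)

lemma egorov_step:
  assumes N: "N \<ge> 1" and Q: "is_quantum_cat A B C D' N \<kappa> U" and ph: "\<phi> \<in> HN N \<kappa>"
    and one: "inner_HN N \<phi> \<phi> = 1" and ev: "U \<phi> = (\<lambda>k. \<mu> * \<phi> k)"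
  shows "inner_HN N (TN N \<kappa> (rowmul n A B C D') \<phi>) \<phi> = inner_HN N (TN N \<kappa> n \<phi>) \<phi>"
proof -
  have un: "inner_HN N (U \<Psi>) (U \<Phi>) = inner_HN N \<Psi> \<Phi>" if "\<Psi> \<in> HN N \<kappa>" "\<Phi> \<in> HN N \<kappa>" for \<Psi> \<Phi>
    using Q that unfolding is_quantum_cat_def by blast
  have eg: "U (TN N \<kappa> (rowmul n A B C D') \<phi>) = TN N \<kappa> n (U \<phi>)"
    using Q ph unfolding is_quantum_cat_def by blast
  have mu: "\<mu> * cnj \<mu> = 1"
    using un[OF ph ph] one by (simp add: ev inner_scale)
  have "inner_HN N (TN N \<kappa> (rowmul n A B C D') \<phi>) \<phi> = inner_HN N (U (TN N \<kappa> (rowmul n A B C D') \<phi>)) (U \<phi>)"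
    using un[OF TN_HN[OF N ph] ph] by simp
  also have "\<dots> = \<mu> * cnj \<mu> * inner_HN N (TN N \<kappa> n \<phi>) \<phi>"
    by (simp add: eg ev TN_scale inner_scale)
  finally show ?thesis using mu by simp
qed

lemma egorov_orb:
  assumes N: "N \<ge> 1" and Q: "is_quantum_cat A B C D' N \<kappa> U" and ph: "\<phi> \<in> HN N \<kappa>"
    and one: "inner_HN N \<phi> \<phi> = 1" and ev: "U \<phi> = (\<lambda>k. \<mu> * \<phi> k)"
  shows "inner_HN N (TN N \<kappa> (orb A B C D' n t) \<phi>) \<phi> = inner_HN N (TN N \<kappa> n \<phi>) \<phi>"
  by (induction t) (simp_all add: egorov_step[OF assms])

definition edelta :: "nat \<Rightarrow> real \<times> real \<Rightarrow> int \<Rightarrow> int \<Rightarrow> complex" where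
  "edelta N \<kappa> k0 k = (if k mod int N = k0 mod int N then cis (- 2 * pi * snd \<kappa> * of_int ((k - k0) div int N)) else 0)"

lemma edelta_HN: "N \<ge> 1 \<Longrightarrow> edelta N \<kappa> k0 \<in> HN N \<kappa>"
proof -
  assume N: "N \<ge> 1"
  have "(k + int N - k0) div int N = (k - k0) div int N + 1" for k
  proof -
    have "(k + int N - k0) = (k - k0) + 1 * int N" by simp
    then show ?thesis using N by (simp only:) (simp)
  qed
  then show ?thesis
    unfolding HN_def edelta_def by (auto simp: cis_mult algebra_simps)
qed

lemma mod_eq_small:
  fixes k k0 :: int
  assumes "k \<in> {1..int N}" "k0 \<in> {1..int N}" "k mod int N = k0 mod int N"
  shows "k = k0"
proof (rule ccontr)
  assume ne: "k \<noteq> k0"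
  have "int N dvd (k - k0)" using assms(3) by (simp add: mod_eq_dvd_iff)
  then have "\<bar>int N\<bar> \<le> \<bar>k - k0\<bar>" using ne by (intro dvd_imp_le_int) auto
  then show False using assms(1,2) by auto
qed

lemma complete_delta:
  assumes N: "N \<ge> 1" and E: "is_eigenbasis N \<kappa> U \<phi>" and k0: "k0 \<in> {1..int N}"
  shows "(\<Sum>j\<in>{1..N}. \<phi> j k * cnj (\<phi> j k0)) = of_nat N * edelta N \<kappa> k0 k"
proof -
  have inn: "inner_HN N (edelta N \<kappa> k0) (\<phi> j) = cnj (\<phi> j k0) / of_nat N" for j
  proof -
    have "(\<Sum>k\<in>{1..int N}. edelta N \<kappa> k0 k * cnj (\<phi> j k)) = (\<Sum>k\<in>{1..int N}. if k = k0 then cnj (\<phi> j k0) else 0)"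
    proof (rule sum.cong)
      fix k assume k: "k \<in> {1..int N}"
      show "edelta N \<kappa> k0 k * cnj (\<phi> j k) = (if k = k0 then cnj (\<phi> j k0) else 0)"
        using mod_eq_small[OF k k0] by (auto simp: edelta_def)
    qed simp
    also have "\<dots> = cnj (\<phi> j k0)" using k0 by simp
    finally show ?thesis by (simp add: inner_HN_def)
  qed
  have "edelta N \<kappa> k0 = (\<lambda>k. \<Sum>j\<in>{1..N}. inner_HN N (edelta N \<kappa> k0) (\<phi> j) * \<phi> j k)"
    using E edelta_HN[OF N] unfolding is_eigenbasis_def by blast
  then have "edelta N \<kappa> k0 k = (\<Sum>j\<in>{1..N}. cnj (\<phi> j k0) / of_nat N * \<phi> j k)"
    by (metis (no_types, lifting) inn sum.cong)
  then have "of_nat N * edelta N \<kappa> k0 k = (\<Sum>j\<in>{1..N}. \<phi> j k * cnj (\<phi> j k0))"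
    using N by (simp add: sum_distrib_left field_simps)
  then show ?thesis by simp
qed

lemma basis_sum:
  assumes N: "N \<ge> 1" and E: "is_eigenbasis N \<kappa> U \<phi>"
  shows "(\<Sum>j\<in>{1..N}. \<phi> j a * cnj (\<phi> j b)) =
     cnj (cis (- 2 * pi * snd \<kappa> * of_int ((b - 1) div int N))) * of_nat N * edelta N \<kappa> ((b - 1) mod int N + 1) a"
proof -
  define b0 where "b0 = (b - 1) mod int N + 1"
  define q where "q = (b - 1) div int N"
  have lt: "(b - 1) mod int N < int N" using N by simp
  have ge: "0 \<le> (b - 1) mod int N" using N by simp
  have b0r: "b0 \<in> {1..int N}" unfolding b0_def atLeastAtMost_iff using lt ge by linarith
  have bb: "b = b0 + int N * q" unfolding b0_def q_def by (simp add: algebra_simps)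
  have HN: "\<phi> j \<in> HN N \<kappa>" if "j \<in> {1..N}" for j using E that unfolding is_eigenbasis_def by blast
  have "(\<Sum>j\<in>{1..N}. \<phi> j a * cnj (\<phi> j b)) = (\<Sum>j\<in>{1..N}. cnj (cis (- 2 * pi * snd \<kappa> * of_int q)) * (\<phi> j a * cnj (\<phi> j b0)))"
  proof (rule sum.cong)
    fix j assume j: "j \<in> {1..N}"
    show "\<phi> j a * cnj (\<phi> j b) = cnj (cis (- 2 * pi * snd \<kappa> * of_int q)) * (\<phi> j a * cnj (\<phi> j b0))"
      unfolding bb HN_shift_int[OF HN[OF j]] by simp
  qed simp
  also have "\<dots> = cnj (cis (- 2 * pi * snd \<kappa> * of_int q)) * (of_nat N * edelta N \<kappa> b0 a)"
    by (simp only: sum_distrib_left[symmetric] complete_delta[OF N E b0r])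
  finally show ?thesis unfolding b0_def q_def by simp
qed

lemma basis_sum_diag:
  assumes N: "N \<ge> 1" and E: "is_eigenbasis N \<kappa> U \<phi>"
  shows "(\<Sum>j\<in>{1..N}. \<phi> j a * cnj (\<phi> j a)) = of_nat N"
proof -
  define b0 where "b0 = (a - 1) mod int N + 1"
  define q where "q = (a - 1) div int N"
  have bb: "a - b0 = int N * q" unfolding b0_def q_def by (simp add: algebra_simps)
  have m: "a mod int N = b0 mod int N" unfolding b0_def by (simp add: mod_add_left_eq)
  have d: "(a - b0) div int N = q" using N unfolding bb by simp
  have "edelta N \<kappa> b0 a = cis (- 2 * pi * snd \<kappa> * of_int q)"
    unfolding edelta_def using m d by simp
  then show ?thesis using basis_sum[OF N E, of a a] unfolding b0_def[symmetric] q_def[symmetric]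
    by (simp add: cis_cnj cis_mult)
qed

lemma basis_sum_off:
  assumes N: "N \<ge> 1" and E: "is_eigenbasis N \<kappa> U \<phi>" and ne: "a mod int N \<noteq> b mod int N"
  shows "(\<Sum>j\<in>{1..N}. \<phi> j a * cnj (\<phi> j b)) = 0"
proof -
  have "((b - 1) mod int N + 1) mod int N = b mod int N" by (simp add: mod_add_left_eq)
  then have "edelta N \<kappa> ((b - 1) mod int N + 1) a = 0" using ne unfolding edelta_def by simp
  then show ?thesis using basis_sum[OF N E, of a b] by simp
qed

lemma cis_eq_1_int:
  assumes "cis x = 1" shows "\<exists>n::int. x = 2 * pi * of_int n"
proof -
  have "exp (\<i> * complex_of_real x) = 1" using assms by (simp add: cis_conv_exp)
  then obtain n :: int where "Im (\<i> * complex_of_real x) = of_int (2 * n) * pi" by (auto simp: exp_eq_1)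
  then show ?thesis by (intro exI[of _ n]) simp
qed

lemma periodic_sum_shift:
  fixes f :: "int \<Rightarrow> complex"
  assumes N: "N \<ge> 1" and per: "\<And>k. f (k + int N) = f k"
  shows "(\<Sum>k\<in>{1..int N}. f (k + 1)) = (\<Sum>k\<in>{1..int N}. f k)"
proof (rule sum.reindex_bij_witness[where j = "\<lambda>a. if a = int N then 1 else a + 1" and i = "\<lambda>b. if b = 1 then int N else b - 1"])
  fix a assume a: "a \<in> {1..int N}"
  show "(if (if a = int N then 1 else a + 1) = 1 then int N else (if a = int N then 1 else a + 1) - 1) = a"
    using a by auto
  show "(if a = int N then 1 else a + 1) \<in> {1..int N}" using a N by auto
  show "f (if a = int N then 1 else a + 1) = f (a + 1)"
    using per[of 1] by (auto simp: add.commute)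
next
  fix b assume b: "b \<in> {1..int N}"
  show "(if (if b = 1 then int N else b - 1) = int N then 1 else (if b = 1 then int N else b - 1) + 1) = b"
    using b N by auto
  show "(if b = 1 then int N else b - 1) \<in> {1..int N}" using b N by auto
qed

lemma roots_sum:
  assumes N: "N \<ge> 1" and nd: "\<not> int N dvd d"
  shows "(\<Sum>k\<in>{1..int N}. cis (2 * pi * of_int d * of_int k / real N)) = 0"
proof -
  let ?f = "\<lambda>k::int. cis (2 * pi * of_int d * of_int k / real N)"
  define z where "z = cis (2 * pi * of_int d / real N)"
  have per: "?f (k + int N) = ?f k" for k
  proof -
    have "?f (k + int N) = ?f k * cis (2 * pi * of_int d)"
      using N by (simp add: cis_mult field_simps)
    also have "cis (2 * pi * of_int d) = 1" by (rule cis_multiple_2pi) simp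
    finally show ?thesis by simp
  qed
  have step: "?f (k + 1) = z * ?f k" for k
    unfolding z_def by (simp add: cis_mult add_divide_distrib distrib_left distrib_right add.commute)
  have "(\<Sum>k\<in>{1..int N}. ?f (k + 1)) = (\<Sum>k\<in>{1..int N}. ?f k)"
    by (rule periodic_sum_shift[where f="?f", OF N per])
  moreover have "z * (\<Sum>k\<in>{1..int N}. ?f k) = (\<Sum>k\<in>{1..int N}. ?f (k + 1))"
    by (simp only: step sum_distrib_left)
  ultimately have "z * (\<Sum>k\<in>{1..int N}. ?f k) = (\<Sum>k\<in>{1..int N}. ?f k)"
    by simp
  moreover have "z \<noteq> 1"
  proof
    assume "z = 1"
    then obtain n :: int where "2 * pi * of_int d / real N = 2 * pi * of_int n"
      unfolding z_def using cis_eq_1_int by blast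
    then have "of_int d = real N * of_int n" using N by (simp add: field_simps)
    then have "d = int N * n" by (metis of_int_eq_iff of_int_mult of_int_of_nat_eq)
    then show False using nd by simp
  qed
  ultimately show ?thesis
    by (metis (no_types, lifting) mult_cancel_right1)
qed

lemma cs_complex:
  fixes x y :: "int \<Rightarrow> complex"
  shows "(cmod (\<Sum>k\<in>A. x k * cnj (y k)))^2 \<le> (\<Sum>k\<in>A. (cmod (x k))^2) * (\<Sum>k\<in>A. (cmod (y k))^2)"
proof -
  have "cmod (\<Sum>k\<in>A. x k * cnj (y k)) \<le> (\<Sum>k\<in>A. cmod (x k) * cmod (y k))"
    using norm_sum[of "\<lambda>k. x k * cnj (y k)" A] by (simp add: norm_mult)
  then have "(cmod (\<Sum>k\<in>A. x k * cnj (y k)))^2 \<le> (\<Sum>k\<in>A. cmod (x k) * cmod (y k))^2"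
    by (intro power_mono) auto
  also have "\<dots> \<le> (\<Sum>k\<in>A. (cmod (x k))^2) * (\<Sum>k\<in>A. (cmod (y k))^2)"
    by (rule Cauchy_Schwarz_ineq_sum)
  finally show ?thesis .
qed



lemma swap4:
  "(\<Sum>j\<in>J. \<Sum>k\<in>K. \<Sum>t\<in>A. \<Sum>t'\<in>A'. F j k t t') = (\<Sum>t\<in>A. \<Sum>t'\<in>A'. \<Sum>k\<in>K. \<Sum>j\<in>J. F j k t t')"
proof -
  have "(\<Sum>j\<in>J. \<Sum>k\<in>K. \<Sum>t\<in>A. \<Sum>t'\<in>A'. F j k t t') = (\<Sum>k\<in>K. \<Sum>j\<in>J. \<Sum>t\<in>A. \<Sum>t'\<in>A'. F j k t t')"
    by (rule sum.swap)
  also have "\<dots> = (\<Sum>k\<in>K. \<Sum>t\<in>A. \<Sum>j\<in>J. \<Sum>t'\<in>A'. F j k t t')"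
    by (rule sum.cong[OF refl], rule sum.swap)
  also have "\<dots> = (\<Sum>k\<in>K. \<Sum>t\<in>A. \<Sum>t'\<in>A'. \<Sum>j\<in>J. F j k t t')"
    by (rule sum.cong[OF refl], rule sum.cong[OF refl], rule sum.swap)
  also have "\<dots> = (\<Sum>t\<in>A. \<Sum>k\<in>K. \<Sum>t'\<in>A'. \<Sum>j\<in>J. F j k t t')"
    by (rule sum.swap)
  also have "\<dots> = (\<Sum>t\<in>A. \<Sum>t'\<in>A'. \<Sum>k\<in>K. \<Sum>j\<in>J. F j k t t')"
    by (rule sum.cong[OF refl], rule sum.swap)
  finally show ?thesis .
qed

lemma small_diff_mod:
  fixes a b :: int
  assumes "2 * \<bar>a\<bar> < int N" "2 * \<bar>b\<bar> < int N" "a \<noteq> b"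
  shows "\<not> int N dvd (a - b)"
proof
  assume "int N dvd (a - b)"
  then have "\<bar>int N\<bar> \<le> \<bar>a - b\<bar>" using assms(3) by (intro dvd_imp_le_int) auto
  then show False using assms(1,2) by linarith
qed

lemma norm_one_basis:
  assumes N: "N \<ge> 1" and E: "is_eigenbasis N \<kappa> U \<phi>" and j: "j \<in> {1..N}"
  shows "(\<Sum>k\<in>{1..int N}. (cmod (\<phi> j k))^2) = real N"
proof -
  have "inner_HN N (\<phi> j) (\<phi> j) = 1" using E j unfolding is_eigenbasis_def by auto
  then have "(\<Sum>k\<in>{1..int N}. \<phi> j k * cnj (\<phi> j k)) = of_nat N"
    using N unfolding inner_HN_def by (simp add: field_simps)
  then have "complex_of_real (\<Sum>k\<in>{1..int N}. (cmod (\<phi> j k))^2) = complex_of_real (real N)"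
    by (simp only: of_real_sum complex_norm_square of_real_of_nat_eq)
  then show ?thesis by (simp only: of_real_eq_iff)
qed

definition cfac :: "nat \<Rightarrow> real \<times> real \<Rightarrow> int \<times> int \<Rightarrow> int \<Rightarrow> complex" where
  "cfac N \<kappa> n k = cis (pi * (2 * real_of_int (snd n) * (real_of_int k + fst \<kappa>) - real_of_int (fst n) * real_of_int (snd n)) / real N)"

lemma TN_cfac: "TN N \<kappa> n \<Psi> k = cfac N \<kappa> n k * \<Psi> (k - fst n)"
  by (simp add: TN_def cfac_def)

lemma cross_zero:
  assumes N: "N \<ge> 1" and E: "is_eigenbasis N \<kappa> U \<phi>"
    and ma: "2 * \<bar>fst m\<bar> < int N" "2 * \<bar>snd m\<bar> < int N"
    and mb: "2 * \<bar>fst m'\<bar> < int N" "2 * \<bar>snd m'\<bar> < int N"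
  shows "(\<Sum>k\<in>{1..int N}. \<Sum>j\<in>{1..N}. cfac N \<kappa> m k * cnj (cfac N \<kappa> m' k) * (\<phi> j (k - fst m) * cnj (\<phi> j (k - fst m'))))
    = (if m = m' then of_nat N * of_nat N else 0)"
proof (cases "m = m'")
  case True
  have "(\<Sum>j\<in>{1..N}. cfac N \<kappa> m k * cnj (cfac N \<kappa> m k) * (\<phi> j (k - fst m) * cnj (\<phi> j (k - fst m)))) = of_nat N" for k
  proof -
    have "cfac N \<kappa> m k * cnj (cfac N \<kappa> m k) = 1" by (simp add: cfac_def cis_cnj cis_mult)
    then show ?thesis by (simp only: sum_distrib_left[symmetric] basis_sum_diag[OF N E]) simp
  qed
  then show ?thesis using True N by simp
next
  case False
  show ?thesis
  proof (cases "fst m = fst m'")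
    case False
    have "(\<Sum>j\<in>{1..N}. \<phi> j (k - fst m) * cnj (\<phi> j (k - fst m'))) = 0" for k
    proof (rule basis_sum_off[OF N E])
      show "(k - fst m) mod int N \<noteq> (k - fst m') mod int N"
      proof
        assume "(k - fst m) mod int N = (k - fst m') mod int N"
        then have "int N dvd ((k - fst m) - (k - fst m'))" by (simp add: mod_eq_dvd_iff)
        then have "int N dvd (fst m' - fst m)" by simp
        then show False using small_diff_mod[OF mb(1) ma(1)] False by auto
      qed
    qed
    then have "(\<Sum>j\<in>{1..N}. cfac N \<kappa> m k * cnj (cfac N \<kappa> m' k) * (\<phi> j (k - fst m) * cnj (\<phi> j (k - fst m')))) = 0" for k
      by (simp add: sum_distrib_left[symmetric])
    then show ?thesis using \<open>m \<noteq> m'\<close> by simp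
  next
    case True
    with \<open>m \<noteq> m'\<close> have sne: "snd m \<noteq> snd m'" by (cases m, cases m') auto
    define d where "d = snd m - snd m'"
    define K where "K = cis (pi * (2 * real_of_int d * fst \<kappa> - real_of_int (fst m) * real_of_int d) / real N)"
    have nd: "\<not> int N dvd d" unfolding d_def by (rule small_diff_mod[OF ma(2) mb(2) sne])
    have cc: "cfac N \<kappa> m k * cnj (cfac N \<kappa> m' k) = K * cis (2 * pi * of_int d * of_int k / real N)" for k
    proof -
      have "cfac N \<kappa> m k * cnj (cfac N \<kappa> m' k) = cis (pi * (2 * real_of_int (snd m) * (real_of_int k + fst \<kappa>) - real_of_int (fst m) * real_of_int (snd m)) / real N
           - pi * (2 * real_of_int (snd m') * (real_of_int k + fst \<kappa>) - real_of_int (fst m') * real_of_int (snd m')) / real N)"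
        by (simp add: cfac_def cis_cnj cis_mult)
      also have "\<dots> = cis (pi * (2 * real_of_int d * fst \<kappa> - real_of_int (fst m) * real_of_int d) / real N + 2 * pi * of_int d * of_int k / real N)"
      proof -
        have Np: "real N > 0" using N by simp
        show ?thesis using True Np unfolding d_def by (simp add: field_simps)
      qed
      finally show ?thesis unfolding K_def by (simp add: cis_mult)
    qed
    have "(\<Sum>j\<in>{1..N}. cfac N \<kappa> m k * cnj (cfac N \<kappa> m' k) * (\<phi> j (k - fst m) * cnj (\<phi> j (k - fst m')))) 
          = of_nat N * K * cis (2 * pi * of_int d * of_int k / real N)" for k
      using True by (simp only: sum_distrib_left[symmetric] basis_sum_diag[OF N E] cc) (simp add: ac_simps)
    then have "(\<Sum>k\<in>{1..int N}. \<Sum>j\<in>{1..N}. cfac N \<kappa> m k * cnj (cfac N \<kappa> m' k) * (\<phi> j (k - fst m) * cnj (\<phi> j (k - fst m'))))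
        = of_nat N * K * (\<Sum>k\<in>{1..int N}. cis (2 * pi * of_int d * of_int k / real N))"
      by (simp add: sum_distrib_left)
    also have "\<dots> = 0" by (simp add: roots_sum[OF N nd])
    finally show ?thesis using \<open>m \<noteq> m'\<close> by simp
  qed
qed

lemma variance:
  assumes N: "N \<ge> 1" and E: "is_eigenbasis N \<kappa> U \<phi>" and T: "T \<ge> 1"
    and mb: "\<And>t. t < T \<Longrightarrow> 2 * \<bar>fst (m t)\<bar> < int N \<and> 2 * \<bar>snd (m t)\<bar> < int N"
    and md: "\<And>t t'. t < T \<Longrightarrow> t' < T \<Longrightarrow> t \<noteq> t' \<Longrightarrow> m t \<noteq> m t'"
    and inv: "\<And>j t. j \<in> {1..N} \<Longrightarrow> t < T \<Longrightarrow>
        inner_HN N (TN N \<kappa> (m t) (\<phi> j)) (\<phi> j) = inner_HN N (TN N \<kappa> n (\<phi> j)) (\<phi> j)"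
  shows "(\<Sum>j\<in>{1..N}. (cmod (inner_HN N (TN N \<kappa> n (\<phi> j)) (\<phi> j)))^2) \<le> real N / real T"
proof -
  define X where "X j = inner_HN N (TN N \<kappa> n (\<phi> j)) (\<phi> j)" for j
  define u where "u j k = (\<Sum>t<T. TN N \<kappa> (m t) (\<phi> j) k)" for j k
  have Np: "real N > 0" using N by simp
  have Tp: "real T > 0" using T by simp
  have X1: "X j = (\<Sum>k\<in>{1..int N}. u j k * cnj (\<phi> j k)) / (of_nat T * of_nat N)" if j: "j \<in> {1..N}" for j
  proof -
    have a: "(\<Sum>t<T. inner_HN N (TN N \<kappa> (m t) (\<phi> j)) (\<phi> j)) = of_nat T * X j"
      using inv[OF j] by (simp add: X_def)
    have "(\<Sum>t<T. inner_HN N (TN N \<kappa> (m t) (\<phi> j)) (\<phi> j))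
        = (1 / of_nat N) * (\<Sum>t<T. \<Sum>k\<in>{1..int N}. TN N \<kappa> (m t) (\<phi> j) k * cnj (\<phi> j k))"
      by (simp add: inner_HN_def sum_distrib_left)
    also have "(\<Sum>t<T. \<Sum>k\<in>{1..int N}. TN N \<kappa> (m t) (\<phi> j) k * cnj (\<phi> j k))
        = (\<Sum>k\<in>{1..int N}. \<Sum>t<T. TN N \<kappa> (m t) (\<phi> j) k * cnj (\<phi> j k))"
      by (rule sum.swap)
    also have "\<dots> = (\<Sum>k\<in>{1..int N}. u j k * cnj (\<phi> j k))"
      by (simp add: u_def sum_distrib_right)
    finally have b: "(\<Sum>t<T. inner_HN N (TN N \<kappa> (m t) (\<phi> j)) (\<phi> j)) = (1 / of_nat N) * (\<Sum>k\<in>{1..int N}. u j k * cnj (\<phi> j k))" .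
    show ?thesis using a b Np Tp by (simp add: field_simps)
  qed
  have X2: "(cmod (X j))^2 \<le> (\<Sum>k\<in>{1..int N}. (cmod (u j k))^2) / (real T ^ 2 * real N)" if j: "j \<in> {1..N}" for j
  proof -
    have "(cmod (X j))^2 = (cmod (\<Sum>k\<in>{1..int N}. u j k * cnj (\<phi> j k)))^2 / (real T * real N)^2"
      unfolding X1[OF j] by (simp add: norm_divide power_divide norm_mult)
    also have "\<dots> \<le> ((\<Sum>k\<in>{1..int N}. (cmod (u j k))^2) * (\<Sum>k\<in>{1..int N}. (cmod (\<phi> j k))^2)) / (real T * real N)^2"
      by (intro divide_right_mono cs_complex) simp
    also have "\<dots> = (\<Sum>k\<in>{1..int N}. (cmod (u j k))^2) / (real T ^ 2 * real N)"
      unfolding norm_one_basis[OF N E j] using Np by (simp add: field_simps power2_eq_square)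
    finally show ?thesis .
  qed
  define F where "F j k t t' = cfac N \<kappa> (m t) k * cnj (cfac N \<kappa> (m t') k) * (\<phi> j (k - fst (m t)) * cnj (\<phi> j (k - fst (m t'))))" for j k t t'
  have uu: "u j k * cnj (u j k) = (\<Sum>t<T. \<Sum>t'<T. F j k t t')" for j k
    unfolding u_def cnj_sum sum_product F_def TN_cfac by (simp add: ac_simps)
  have inner_t: "(\<Sum>t'<T. if m t = m t' then of_nat N * of_nat N else 0) = (of_nat N * of_nat N :: complex)" if t: "t < T" for t
  proof -
    have "(\<Sum>t'<T. if m t = m t' then of_nat N * of_nat N else 0) = (\<Sum>t'<T. if t' = t then of_nat N * of_nat N else (0::complex))"
      using md t by (intro sum.cong) auto
    also have "\<dots> = of_nat N * of_nat N" using t by simp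
    finally show ?thesis .
  qed
  have "complex_of_real (\<Sum>j\<in>{1..N}. \<Sum>k\<in>{1..int N}. (cmod (u j k))^2) = (\<Sum>j\<in>{1..N}. \<Sum>k\<in>{1..int N}. u j k * cnj (u j k))"
    by (simp only: of_real_sum complex_norm_square)
  also have "\<dots> = (\<Sum>j\<in>{1..N}. \<Sum>k\<in>{1..int N}. \<Sum>t<T. \<Sum>t'<T. F j k t t')"
    by (simp only: uu)
  also have "\<dots> = (\<Sum>t<T. \<Sum>t'<T. \<Sum>k\<in>{1..int N}. \<Sum>j\<in>{1..N}. F j k t t')"
    by (rule swap4)
  also have "\<dots> = (\<Sum>t<T. \<Sum>t'<T. if m t = m t' then of_nat N * of_nat N else 0)"
  proof (intro sum.cong refl)
    fix t t' assume t: "t \<in> {..<T}" and t': "t' \<in> {..<T}"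
    show "(\<Sum>k\<in>{1..int N}. \<Sum>j\<in>{1..N}. F j k t t') = (if m t = m t' then of_nat N * of_nat N else 0)"
      unfolding F_def using cross_zero[OF N E] mb t t' by auto
  qed
  also have "\<dots> = (\<Sum>t<T. of_nat N * of_nat N)"
    by (intro sum.cong refl inner_t) simp
  also have "\<dots> = complex_of_real (real T * real N * real N)" by simp
  finally have key: "(\<Sum>j\<in>{1..N}. \<Sum>k\<in>{1..int N}. (cmod (u j k))^2) = real T * real N * real N"
    by (simp only: of_real_eq_iff)
  have "(\<Sum>j\<in>{1..N}. (cmod (X j))^2) \<le> (\<Sum>j\<in>{1..N}. (\<Sum>k\<in>{1..int N}. (cmod (u j k))^2) / (real T ^ 2 * real N))"
    by (intro sum_mono X2)
  also have "\<dots> = (\<Sum>j\<in>{1..N}. \<Sum>k\<in>{1..int N}. (cmod (u j k))^2) / (real T ^ 2 * real N)"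
    by (simp add: sum_divide_distrib)
  also have "\<dots> = real N / real T" unfolding key using Np Tp by (simp add: field_simps power2_eq_square)
  finally show ?thesis unfolding X_def .
qed

lemma int_norm_ge: "real_of_int \<bar>fst n\<bar> \<le> int_norm n" "real_of_int \<bar>snd n\<bar> \<le> int_norm n"
proof -
  show "real_of_int \<bar>fst n\<bar> \<le> int_norm n"
    unfolding int_norm_def by (rule real_le_rsqrt) (simp add: power2_eq_square)
  show "real_of_int \<bar>snd n\<bar> \<le> int_norm n"
    unfolding int_norm_def by (rule real_le_rsqrt) (simp add: power2_eq_square)
qed

lemma int_norm_zero: "int_norm (0, 0) = 0" by (simp add: int_norm_def)

lemma box_subset: "{n. int_norm n < Dn} \<subseteq> {- \<lceil>Dn\<rceil>..\<lceil>Dn\<rceil>} \<times> {- \<lceil>Dn\<rceil>..\<lceil>Dn\<rceil>}"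
proof
  fix n assume "n \<in> {n. int_norm n < Dn}"
  then have "real_of_int \<bar>fst n\<bar> < Dn" "real_of_int \<bar>snd n\<bar> < Dn" using int_norm_ge[of n] by auto
  then have "\<bar>fst n\<bar> \<le> \<lceil>Dn\<rceil>" "\<bar>snd n\<bar> \<le> \<lceil>Dn\<rceil>" by linarith+
  then show "n \<in> {- \<lceil>Dn\<rceil>..\<lceil>Dn\<rceil>} \<times> {- \<lceil>Dn\<rceil>..\<lceil>Dn\<rceil>}" by (cases n) auto
qed

lemma box_finite: "finite {n. int_norm n < Dn}"
  by (rule finite_subset[OF box_subset]) auto

lemma box_card:
  assumes "Dn \<ge> 1"
  shows "real (card {n. n \<noteq> (0,0) \<and> int_norm n < Dn}) \<le> 25 * Dn^2"
proof -
  let ?k = "\<lceil>Dn\<rceil>"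
  have "card {n. n \<noteq> (0,0) \<and> int_norm n < Dn} \<le> card ({- ?k..?k} \<times> {- ?k..?k})"
    by (rule card_mono) (use box_subset[of Dn] in auto)
  also have "\<dots> = nat (2 * ?k + 1) * nat (2 * ?k + 1)" by (simp add: card_cartesian_product)
  finally have c: "real (card {n. n \<noteq> (0,0) \<and> int_norm n < Dn}) \<le> real (nat (2 * ?k + 1) * nat (2 * ?k + 1))"
    by (simp only: of_nat_le_iff)
  have k0: "?k \<ge> 1" using assms by linarith
  have "real (nat (2 * ?k + 1) * nat (2 * ?k + 1)) = (2 * real_of_int ?k + 1)^2"
    using k0 by (simp add: power2_eq_square)
  also have "\<dots> \<le> (2 * Dn + 3)^2"
    using k0 by (intro power_mono) linarith+
  also have "\<dots> \<le> (5 * Dn)^2" using assms by (intro power_mono) auto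
  also have "\<dots> = 25 * Dn^2" by (simp add: power2_eq_square)
  finally show ?thesis using c by linarith
qed

lemma inner_sum_left:
  "finite S \<Longrightarrow> inner_HN N (\<lambda>k. \<Sum>n\<in>S. c n * f n k) g = (\<Sum>n\<in>S. c n * inner_HN N (f n) g)"
  unfolding inner_HN_def
  by (simp add: sum_distrib_left sum_distrib_right sum.swap[of _ S] ac_simps)

lemma trig_shift_supp: "{n. trig_shift a x n \<noteq> 0} = {n. a n \<noteq> 0}"
  by (simp add: trig_shift_def)

lemma err_bound:
  assumes E: "is_eigenbasis N \<kappa> U \<phi>" and j: "j \<in> {1..N}" and Dn: "Dn > 0"
    and supp: "\<And>n. int_norm n \<ge> Dn \<Longrightarrow> a n = 0"
    and a0: "cmod (a (0,0) - v) \<le> e0"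
    and an: "\<And>n. cmod (a n) \<le> cc"
  shows "cmod (inner_HN N (OpN N \<kappa> (trig_shift a x) (\<phi> j)) (\<phi> j) - v)
     \<le> e0 + cc * (\<Sum>n\<in>{n. n \<noteq> (0,0) \<and> int_norm n < Dn}. cmod (inner_HN N (TN N \<kappa> n (\<phi> j)) (\<phi> j)))"
proof -
  let ?Bz = "{n. int_norm n < Dn}" and ?B = "{n. n \<noteq> (0,0) \<and> int_norm n < Dn}"
  let ?g = "\<lambda>n. trig_shift a x n * inner_HN N (TN N \<kappa> n (\<phi> j)) (\<phi> j)"
  have sub: "{n. a n \<noteq> 0} \<subseteq> ?Bz"
  proof (rule subsetI)
    fix n assume n: "n \<in> {n. a n \<noteq> 0}"
    show "n \<in> ?Bz"
    proof (rule ccontr)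
      assume "n \<notin> ?Bz"
      then have "int_norm n \<ge> Dn" by simp
      then have "a n = 0" by (rule supp)
      with n show False by simp
    qed
  qed
  have fin: "finite {n. a n \<noteq> 0}" by (rule finite_subset[OF sub box_finite])
  have one: "inner_HN N (\<phi> j) (\<phi> j) = 1" using E j unfolding is_eigenbasis_def by auto
  have "inner_HN N (OpN N \<kappa> (trig_shift a x) (\<phi> j)) (\<phi> j) = (\<Sum>n\<in>{n. a n \<noteq> 0}. ?g n)"
    unfolding OpN_def trig_shift_supp by (rule inner_sum_left[OF fin])
  also have "\<dots> = (\<Sum>n\<in>?Bz. ?g n)"
    by (rule sum.mono_neutral_left[OF box_finite sub]) (auto simp: trig_shift_def)
  also have "?Bz = insert (0,0) ?B" using Dn by (auto simp: int_norm_zero)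
  also have "(\<Sum>n\<in>insert (0,0) ?B. ?g n) = ?g (0,0) + (\<Sum>n\<in>?B. ?g n)"
    by (rule sum.insert) (auto intro: finite_subset[OF _ box_finite[of Dn]])
  also have "?g (0,0) = a (0,0)"
    by (simp add: trig_shift_def wedge_def ivec_def TN_zero one)
  finally have eq: "inner_HN N (OpN N \<kappa> (trig_shift a x) (\<phi> j)) (\<phi> j) - v = (a (0,0) - v) + (\<Sum>n\<in>?B. ?g n)"
    by simp
  have "cmod (\<Sum>n\<in>?B. ?g n) \<le> (\<Sum>n\<in>?B. cmod (?g n))" by (rule norm_sum)
  also have "\<dots> \<le> (\<Sum>n\<in>?B. cc * cmod (inner_HN N (TN N \<kappa> n (\<phi> j)) (\<phi> j)))"
  proof (rule sum_mono)
    fix n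
    have "cmod (?g n) = cmod (a n) * cmod (inner_HN N (TN N \<kappa> n (\<phi> j)) (\<phi> j))"
      by (simp add: trig_shift_def norm_mult)
    also have "\<dots> \<le> cc * cmod (inner_HN N (TN N \<kappa> n (\<phi> j)) (\<phi> j))"
      by (intro mult_right_mono an) simp
    finally show "cmod (?g n) \<le> cc * cmod (inner_HN N (TN N \<kappa> n (\<phi> j)) (\<phi> j))" .
  qed
  also have "\<dots> = cc * (\<Sum>n\<in>?B. cmod (inner_HN N (TN N \<kappa> n (\<phi> j)) (\<phi> j)))"
    by (simp add: sum_distrib_left)
  finally have s: "cmod (\<Sum>n\<in>?B. ?g n) \<le> cc * (\<Sum>n\<in>?B. cmod (inner_HN N (TN N \<kappa> n (\<phi> j)) (\<phi> j)))" .
  show ?thesis unfolding eq using norm_triangle_ineq[of "a (0,0) - v" "\<Sum>n\<in>?B. ?g n"] a0 s by linarith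
qed

lemma cheb:
  fixes e :: "nat \<Rightarrow> real"
  assumes fin: "finite J" and nn: "\<And>j. j \<in> J \<Longrightarrow> 0 \<le> e j"
    and sq: "(\<Sum>j\<in>J. (e j)^2) \<le> M * V" and V: "V \<ge> 0" and M: "M \<ge> 0"
  shows "real (card {j\<in>J. \<not> e j \<le> sqrt (sqrt V)}) \<le> M * sqrt V"
proof (cases "V = 0")
  case True
  have "(\<Sum>j\<in>J. (e j)^2) = 0" using sq True by (simp add: sum_nonneg antisym)
  then have "\<forall>j\<in>J. (e j)^2 = 0" using fin by (simp add: sum_nonneg_eq_0_iff)
  then have em: "{j\<in>J. \<not> e j \<le> sqrt (sqrt V)} = {}" using True by auto
  show ?thesis unfolding em using True by simp
next
  case False
  then have Vp: "V > 0" using V by simp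
  let ?Bad = "{j\<in>J. \<not> e j \<le> sqrt (sqrt V)}"
  have "real (card ?Bad) * sqrt V = (\<Sum>j\<in>?Bad. sqrt V)" by simp
  also have "\<dots> \<le> (\<Sum>j\<in>?Bad. (e j)^2)"
  proof (rule sum_mono)
    fix j assume "j \<in> ?Bad"
    then have "sqrt (sqrt V) < e j" by auto
    then have "(sqrt (sqrt V))^2 \<le> (e j)^2" using V by (intro power_mono) auto
    then show "sqrt V \<le> (e j)^2" using V by simp
  qed
  also have "\<dots> \<le> (\<Sum>j\<in>J. (e j)^2)" by (rule sum_mono2[OF fin]) auto
  also have "\<dots> \<le> M * V" by (rule sq)
  also have "\<dots> = M * sqrt V * sqrt V" using V by (simp add: mult.assoc)
  finally have "real (card ?Bad) * sqrt V \<le> M * sqrt V * sqrt V" .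
  then show ?thesis using Vp by (simp add: mult_le_cancel_right)
qed

lemma ln_nat_top: "filterlim (\<lambda>N::nat. ln (real N)) at_top sequentially"
  by real_asymp

lemma ln_sqrt_ev: "eventually (\<lambda>N::nat. 2 * ln (real N) \<le> sqrt (real N)) sequentially"
  by real_asymp

lemma ln_powr_zero: "s < 0 \<Longrightarrow> ((\<lambda>N::nat. ln (real N) powr s) \<longlongrightarrow> 0) sequentially"
  by (rule tendsto_neg_powr[OF _ ln_nat_top])

lemma ev_ln_ge: "eventually (\<lambda>N::nat. K \<le> ln (real N)) sequentially"
  using ln_nat_top by (simp add: filterlim_at_top)

lemma ninf_le_norm: "real_of_int (ninf n) \<le> int_norm n"
  using int_norm_ge[of n] by (simp add: ninf_def)

lemma ej_bound:
  assumes N: "N \<ge> 1" and E: "is_eigenbasis N \<kappa> U \<phi>" and Q: "is_quantum_cat A B C D' N \<kappa> U"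
    and det: "A * D' - B * C = 1" and hyp: "\<bar>A + D'\<bar> > 2"
    and T: "T \<ge> 1"
    and LT: "2 * real_of_int (\<bar>A\<bar> + \<bar>B\<bar> + \<bar>C\<bar> + \<bar>D'\<bar>) ^ T * Dn \<le> real N"
  shows "(\<Sum>j\<in>{1..N}. (\<Sum>n\<in>{n. n \<noteq> (0,0) \<and> int_norm n < Dn}. cmod (inner_HN N (TN N \<kappa> n (\<phi> j)) (\<phi> j)))^2)
     \<le> real N * ((real (card {n. n \<noteq> (0,0) \<and> int_norm n < Dn}))^2 / real T)"
proof -
  let ?B = "{n. n \<noteq> (0,0) \<and> int_norm n < Dn}"
  let ?a = "\<lambda>n j. cmod (inner_HN N (TN N \<kappa> n (\<phi> j)) (\<phi> j))"
  define L where "L = \<bar>A\<bar> + \<bar>B\<bar> + \<bar>C\<bar> + \<bar>D'\<bar>"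
  have L1: "L \<ge> 1" using hyp unfolding L_def by linarith
  have finB: "finite ?B" by (rule finite_subset[OF _ box_finite[of Dn]]) auto
  have var: "(\<Sum>j\<in>{1..N}. (?a n j)^2) \<le> real N / real T" if n: "n \<in> ?B" for n
  proof (rule variance[OF N E T])
    fix t assume t: "t < T"
    have nD: "real_of_int (ninf n) < Dn" using n ninf_le_norm[of n] by auto
    have n0: "0 \<le> ninf n" by (simp add: ninf_def)
    have "ninf (orb A B C D' n t) \<le> L ^ t * ninf n" unfolding L_def by (rule ninf_orb)
    then have "real_of_int (ninf (orb A B C D' n t)) \<le> real_of_int L ^ t * real_of_int (ninf n)"
      by (metis of_int_le_iff of_int_mult of_int_power)
    also have "\<dots> \<le> real_of_int L ^ T * real_of_int (ninf n)"
      using L1 t n0 by (intro mult_right_mono power_increasing) auto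
    also have "\<dots> < real_of_int L ^ T * Dn"
      using L1 nD by (intro mult_strict_left_mono) auto
    finally have "2 * real_of_int (ninf (orb A B C D' n t)) < real N" using LT unfolding L_def by linarith
    then have "2 * ninf (orb A B C D' n t) < int N" by linarith
    then show "2 * \<bar>fst (orb A B C D' n t)\<bar> < int N \<and> 2 * \<bar>snd (orb A B C D' n t)\<bar> < int N"
      by (simp add: ninf_def max_def split: if_splits)
  next
    fix t t' assume "t < T" "t' < T" "t \<noteq> t'"
    then show "orb A B C D' n t \<noteq> orb A B C D' n t'"
      using orb_distinct[OF det hyp] n by (metis (mono_tags, lifting) linorder_neqE_nat mem_Collect_eq)
  next
    fix j t assume j: "j \<in> {1..N}" and t: "t < T"
    have ph: "\<phi> j \<in> HN N \<kappa>" and one: "inner_HN N (\<phi> j) (\<phi> j) = 1"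
      and ev: "\<exists>\<mu>. U (\<phi> j) = (\<lambda>k. \<mu> * \<phi> j k)"
      using E j unfolding is_eigenbasis_def by auto
    then obtain \<mu> where "U (\<phi> j) = (\<lambda>k. \<mu> * \<phi> j k)" by blast
    then show "inner_HN N (TN N \<kappa> (orb A B C D' n t) (\<phi> j)) (\<phi> j) = inner_HN N (TN N \<kappa> n (\<phi> j)) (\<phi> j)"
      by (rule egorov_orb[OF N Q ph one])
  qed
  have cs: "(\<Sum>n\<in>?B. ?a n j)^2 \<le> real (card ?B) * (\<Sum>n\<in>?B. (?a n j)^2)" for j
    using Cauchy_Schwarz_ineq_sum[of "\<lambda>_. 1" "\<lambda>n. ?a n j" ?B] by simp
  have "(\<Sum>j\<in>{1..N}. (\<Sum>n\<in>?B. ?a n j)^2) \<le> (\<Sum>j\<in>{1..N}. real (card ?B) * (\<Sum>n\<in>?B. (?a n j)^2))"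
    by (intro sum_mono cs)
  also have "\<dots> = real (card ?B) * (\<Sum>n\<in>?B. \<Sum>j\<in>{1..N}. (?a n j)^2)"
    by (simp only: sum_distrib_left[symmetric]) (rule arg_cong[where f="\<lambda>x. real (card ?B) * x"], rule sum.swap)
  also have "\<dots> \<le> real (card ?B) * (\<Sum>n\<in>?B. real N / real T)"
    by (intro mult_left_mono sum_mono var) auto
  also have "\<dots> = real N * ((real (card ?B))^2 / real T)"
    by (simp add: power2_eq_square)
  finally show ?thesis .
qed

theorem theorem1p2:
  fixes A B C D' :: int and \<alpha> :: real
    and \<kappa> :: "nat \<Rightarrow> real \<times> real"
    and U :: "nat \<Rightarrow> (int \<Rightarrow> complex) \<Rightarrow> (int \<Rightarrow> complex)"
  assumes det: "A * D' - B * C = 1"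
    and hyp: "\<bar>A + D'\<bar> > 2"
    and ham: "\<exists>\<alpha>0 \<beta> \<gamma> :: real. \<gamma>^2 > \<alpha>0 * \<beta> \<and>
              mat_exp (mat22 \<gamma> \<beta> (- \<alpha>0) (- \<gamma>)) = mat22 (of_int A) (of_int B) (of_int C) (of_int D')"
    and quant: "\<And>N. N \<ge> 1 \<Longrightarrow> is_quantum_cat A B C D' N (\<kappa> N) (U N)"
    and alpha: "0 \<le> \<alpha>" "\<alpha> < 1/4"
  defines "r \<equiv> (\<lambda>N::nat. ln (real N) powr (- \<alpha>))"
  shows "\<exists>D :: nat \<Rightarrow> real. (\<forall>N. D N > 0) \<and> (\<lambda>N. 1 / D N) \<in> o(r) \<and>
     (\<forall>ap am. admissible_majorants r D ap am \<longrightarrow>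
       (\<forall>\<phi> :: nat \<Rightarrow> nat \<Rightarrow> int \<Rightarrow> complex.
          (\<forall>N. N \<ge> 1 \<longrightarrow> is_eigenbasis N (\<kappa> N) (U N) (\<phi> N)) \<longrightarrow>
          (\<exists>S :: nat \<Rightarrow> nat set. (\<forall>N. S N \<subseteq> {1..N}) \<and>
             (\<lambda>N. real (card (S N)) / real N) \<longlonglongrightarrow> 1 \<and>
             (\<forall>b \<in> {ap, am}. \<forall>\<epsilon>>0. \<forall>\<^sub>F N in sequentially. \<forall>x. \<forall>j\<in>S N.
                cmod (inner_HN N (OpN N (\<kappa> N) (trig_shift (b N) x) (\<phi> N j)) (\<phi> N j)
                      - complex_of_real (torus_vol x (r N))) \<le> \<epsilon> * (r N)^2))))"
proof -
  define L where "L = \<bar>A\<bar> + \<bar>B\<bar> + \<bar>C\<bar> + \<bar>D'\<bar>"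
  have L3: "real_of_int L \<ge> 3" using hyp unfolding L_def by linarith
  have lnL: "ln (real_of_int L) > 0" using L3 by simp
  define \<beta> where "\<beta> = (\<alpha> + 1/4) / 2"
  have \<beta>: "\<alpha> < \<beta>" "\<beta> < 1/4" "0 < \<beta>" using alpha unfolding \<beta>_def by auto
  define lg where "lg = (\<lambda>N::nat. ln (real N))"
  define D where "D = (\<lambda>N. max 1 (lg N powr \<beta>))"
  define T where "T = (\<lambda>N. nat \<lfloor>lg N / (2 * ln (real_of_int L))\<rfloor>)"
  define K where "K = max 1 (4 * ln (real_of_int L))"
  define P where "P = (\<lambda>N. 3 \<le> N \<and> K \<le> lg N \<and> 2 * lg N \<le> sqrt (real N))"
  have evP: "eventually P sequentially"
    unfolding P_def lg_def
    using eventually_ge_at_top[of "3::nat"] ev_ln_ge[of K] ln_sqrt_ev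
    by eventually_elim auto
  have rD: "r = (\<lambda>N. lg N powr (- \<alpha>))" unfolding r_def lg_def ..
  have P1: "lg N \<ge> 1" "lg N > 0" "N \<ge> 1" "D N = lg N powr \<beta>" "r N = lg N powr (- \<alpha>)" "r N > 0"
    if "P N" for N
  proof -
    show l1: "lg N \<ge> 1" using that unfolding P_def K_def by auto
    then show "lg N > 0" by simp
    show "N \<ge> 1" using that unfolding P_def by auto
    have "lg N powr \<beta> \<ge> 1" using l1 \<beta> by (simp add: ge_one_powr_ge_zero)
    then show "D N = lg N powr \<beta>" unfolding D_def by simp
    show "r N = lg N powr (- \<alpha>)" unfolding rD ..
    then show "r N > 0" using l1 by simp
  qed
  have P2: "r N * D N \<ge> 1" "r N / D N = (r N)^2 * lg N powr (\<alpha> - \<beta>)" if "P N" for N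
  proof -
    note p = P1[OF that]
    have "r N * D N = lg N powr (\<beta> - \<alpha>)" unfolding p(4) p(5) by (simp add: powr_add[symmetric])
    also have "\<dots> \<ge> 1" using p(1) \<beta> by (simp add: ge_one_powr_ge_zero)
    finally show "r N * D N \<ge> 1" .
    have "(r N)^2 * lg N powr (\<alpha> - \<beta>) = lg N powr (- \<alpha> + - \<alpha> + (\<alpha> - \<beta>))"
      unfolding p(5) by (simp only: powr_add power2_eq_square)
    also have "\<dots> = lg N powr (- \<alpha> - \<beta>)" by simp
    also have "\<dots> = r N / D N" unfolding p(4) p(5) by (simp add: powr_diff)
    finally show "r N / D N = (r N)^2 * lg N powr (\<alpha> - \<beta>)" ..
  qed
  have P3: "T N \<ge> 1" "real (T N) \<ge> lg N / (4 * ln (real_of_int L))"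
      "2 * real_of_int L ^ T N * D N \<le> real N" if "P N" for N
  proof -
    note p = P1[OF that]
    define q where "q = lg N / (2 * ln (real_of_int L))"
    have q2: "q \<ge> 2" using that lnL unfolding P_def K_def q_def by (simp add: field_simps)
    have Tq: "real (T N) \<le> q" "real (T N) \<ge> q - 1" unfolding T_def q_def[symmetric] using q2 by linarith+
    then show "T N \<ge> 1" using q2 by linarith
    show "real (T N) \<ge> lg N / (4 * ln (real_of_int L))" using Tq q2 lnL unfolding q_def by (simp add: field_simps)
    have "ln (real_of_int L ^ (2 * T N)) = real (2 * T N) * ln (real_of_int L)" by (rule ln_realpow)
    also have "\<dots> \<le> 2 * q * ln (real_of_int L)" using Tq lnL by simp
    also have "\<dots> = ln (real N)" unfolding q_def lg_def using lnL by simp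
    finally have "real_of_int L ^ (2 * T N) \<le> real N" using L3 p(3) by (subst (asm) ln_le_cancel_iff) auto
    then have "(real_of_int L ^ T N)^2 \<le> real N" by (simp add: power_mult[symmetric] mult.commute)
    then have LT: "real_of_int L ^ T N \<le> sqrt (real N)" by (rule real_le_rsqrt)
    have "D N \<le> lg N" unfolding p(4) using powr_mono[of \<beta> 1 "lg N"] \<beta> p(1) by simp
    have "2 * real_of_int L ^ T N * D N \<le> 2 * sqrt (real N) * lg N"
      using LT \<open>D N \<le> lg N\<close> p(1) L3 p(4) by (intro mult_mono) auto
    also have "\<dots> = sqrt (real N) * (2 * lg N)" by simp
    also have "\<dots> \<le> sqrt (real N) * sqrt (real N)" using that unfolding P_def by (intro mult_left_mono) auto
    also have "\<dots> = real N" by simp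
    finally show "2 * real_of_int L ^ T N * D N \<le> real N" .
  qed
  show ?thesis
  proof (intro exI[of _ D] conjI allI impI)
    show "\<And>N. D N > 0" unfolding D_def by simp
  next
    show "(\<lambda>N. 1 / D N) \<in> o(r)"
    proof (rule smalloI_tendsto)
      have ev1: "eventually (\<lambda>N. lg N powr (\<alpha> - \<beta>) = 1 / D N / r N) sequentially"
        using evP
      proof eventually_elim
        case (elim N)
        note p = P1[OF elim]
        show ?case unfolding p(4) p(5) using p(2) by (simp add: powr_diff powr_minus field_simps)
      qed
      have t1: "((\<lambda>N. lg N powr (\<alpha> - \<beta>)) \<longlongrightarrow> 0) sequentially"
        unfolding lg_def by (rule ln_powr_zero) (use \<beta> in simp)
      show "((\<lambda>N. 1 / D N / r N) \<longlongrightarrow> 0) sequentially"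
        by (rule Lim_transform_eventually[OF t1 ev1])
      show "\<forall>\<^sub>F N in sequentially. r N \<noteq> 0"
        using evP by eventually_elim (use P1 in auto)
    qed
  next
    fix ap am and \<phi> :: "nat \<Rightarrow> nat \<Rightarrow> int \<Rightarrow> complex"
    assume adm: "admissible_majorants r D ap am"
      and eig: "\<forall>N\<ge>1. is_eigenbasis N (\<kappa> N) (U N) (\<phi> N)"
    obtain c C where adm': "\<And>N. r N * D N \<ge> 1 \<Longrightarrow>
        (\<forall>n. int_norm n \<ge> D N \<longrightarrow> ap N n = 0 \<and> am N n = 0) \<and>
        cmod (ap N 0 - complex_of_real (torus_vol 0 (r N))) \<le> C * r N / D N \<and>
        cmod (am N 0 - complex_of_real (torus_vol 0 (r N))) \<le> C * r N / D N \<and>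
        (\<forall>n. cmod (ap N n) \<le> c * (r N)^2 \<and> cmod (am N n) \<le> c * (r N)^2)"
      using adm unfolding admissible_majorants_def by blast
    define Bx where "Bx N = {n. n \<noteq> (0,0) \<and> int_norm n < D N}" for N
    define Ej where "Ej N j = (\<Sum>n\<in>Bx N. cmod (inner_HN N (TN N (\<kappa> N) n (\<phi> N j)) (\<phi> N j)))" for N j
    define V where "V N = (real (card (Bx N)))^2 / real (T N)" for N
    define S where "S N = {j\<in>{1..N}. Ej N j \<le> sqrt (sqrt (V N))}" for N
    have V0: "V N \<ge> 0" for N unfolding V_def by simp
    have VW: "V N \<le> 2500 * ln (real_of_int L) * lg N powr (4 * \<beta> - 1)" if "P N" for N
    proof -
      note p = P1[OF that] and p3 = P3[OF that]
      have D1: "D N \<ge> 1" unfolding D_def by simp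
      have Tp: "real (T N) > 0" using p3(1) by simp
      have "real (card (Bx N)) \<le> 25 * (D N)^2" unfolding Bx_def by (rule box_card[OF D1])
      then have "(real (card (Bx N)))^2 \<le> (25 * (D N)^2)^2" by (intro power_mono) auto
      then have "V N \<le> (25 * (D N)^2)^2 / real (T N)" unfolding V_def using Tp by (simp add: divide_right_mono)
      also have "\<dots> \<le> (25 * (D N)^2)^2 / (lg N / (4 * ln (real_of_int L)))"
      proof (rule divide_left_mono)
        show "0 < real (T N) * (lg N / (4 * ln (real_of_int L)))"
          using Tp p(2) lnL by (intro mult_pos_pos divide_pos_pos) auto
      qed (use p3(2) in auto)
      also have "(D N)^2 = lg N powr (2 * \<beta>)" unfolding p(4) using p(2) by (simp add: powr_power)
      also have "(25 * lg N powr (2 * \<beta>))^2 = 625 * lg N powr (4 * \<beta>)"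
        using p(2) by (simp add: power_mult_distrib powr_power)
      also have "625 * lg N powr (4 * \<beta>) / (lg N / (4 * ln (real_of_int L))) = 2500 * ln (real_of_int L) * (lg N powr (4 * \<beta>) / lg N)"
        using p(2) lnL by (simp add: field_simps)
      also have "lg N powr (4 * \<beta>) / lg N = lg N powr (4 * \<beta> - 1)" using p(2) by (simp add: powr_diff)
      finally show ?thesis .
    qed
    have Wlim: "((\<lambda>N. 2500 * ln (real_of_int L) * lg N powr (4 * \<beta> - 1)) \<longlongrightarrow> 0) sequentially"
    proof -
      have "((\<lambda>N. lg N powr (4 * \<beta> - 1)) \<longlongrightarrow> 0) sequentially"
        unfolding lg_def by (rule ln_powr_zero) (use \<beta> in simp)
      then show ?thesis by (intro tendsto_mult_right_zero)
    qed
    have evVW: "eventually (\<lambda>N. V N \<le> 2500 * ln (real_of_int L) * lg N powr (4 * \<beta> - 1)) sequentially"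
      using evP by eventually_elim (rule VW)
    have Vlim: "(V \<longlongrightarrow> 0) sequentially"
      by (rule tendsto_sandwich[OF _ evVW tendsto_const Wlim]) (use V0 in simp)
    have sumE: "(\<Sum>j\<in>{1..N}. (Ej N j)^2) \<le> real N * V N" if "P N" for N
    proof -
      note p = P1[OF that] and p3 = P3[OF that]
      show ?thesis unfolding Ej_def V_def Bx_def
        by (rule ej_bound[OF p(3) _ quant[OF p(3)] det hyp p3(1)]) (use eig p(3) p3(3) in \<open>simp_all add: L_def\<close>)
    qed
    have cardS: "real (card (S N)) / real N \<ge> 1 - sqrt (V N)" if "P N" for N
    proof -
      note p = P1[OF that]
      let ?Bad = "{j\<in>{1..N}. \<not> Ej N j \<le> sqrt (sqrt (V N))}"
      have bad: "real (card ?Bad) \<le> real N * sqrt (V N)"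
        by (rule cheb[OF _ _ sumE[OF that] V0]) (auto simp: Ej_def intro: sum_nonneg)
      have "{1..N} = S N \<union> ?Bad" "S N \<inter> ?Bad = {}" unfolding S_def by auto
      then have "card {1..N} = card (S N) + card ?Bad" by (metis card_Un_disjoint finite_Un finite_atLeastAtMost)
      then have "real N = real (card (S N)) + real (card ?Bad)" by simp
      then have "real (card (S N)) \<ge> real N - real N * sqrt (V N)" using bad by linarith
      then show ?thesis using p(3) by (simp add: field_simps)
    qed
    have cardS1: "real (card (S N)) / real N \<le> 1" if "N \<ge> 1" for N
    proof -
      have "card (S N) \<le> card {1..N}" unfolding S_def by (rule card_mono) auto
      then show ?thesis using that by simp
    qed
    show "\<exists>S :: nat \<Rightarrow> nat set. (\<forall>N. S N \<subseteq> {1..N}) \<and>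
             (\<lambda>N. real (card (S N)) / real N) \<longlonglongrightarrow> 1 \<and>
             (\<forall>b \<in> {ap, am}. \<forall>\<epsilon>>0. \<forall>\<^sub>F N in sequentially. \<forall>x. \<forall>j\<in>S N.
                cmod (inner_HN N (OpN N (\<kappa> N) (trig_shift (b N) x) (\<phi> N j)) (\<phi> N j)
                      - complex_of_real (torus_vol x (r N))) \<le> \<epsilon> * (r N)^2)"
    proof (intro exI[of _ S] conjI ballI allI impI)
      show "\<And>N. S N \<subseteq> {1..N}" unfolding S_def by auto
    next
      have l1: "((\<lambda>N. 1 - sqrt (V N)) \<longlongrightarrow> 1) sequentially"
        using tendsto_diff[OF tendsto_const tendsto_real_sqrt[OF Vlim]] by simp
      have ev1: "eventually (\<lambda>N. 1 - sqrt (V N) \<le> real (card (S N)) / real N) sequentially"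
        using evP by eventually_elim (rule cardS)
      have ev2: "eventually (\<lambda>N. real (card (S N)) / real N \<le> 1) sequentially"
        using evP by eventually_elim (rule cardS1, rule P1)
      show "(\<lambda>N. real (card (S N)) / real N) \<longlonglongrightarrow> 1"
        by (rule tendsto_sandwich[OF ev1 ev2 l1 tendsto_const])
    next
      fix b and \<epsilon> :: real assume b: "b \<in> {ap, am}" and \<epsilon>: "\<epsilon> > 0"
      have bprop: "(\<forall>n. int_norm n \<ge> D N \<longrightarrow> b N n = 0) \<and>
          cmod (b N (0,0) - complex_of_real (torus_vol 0 (r N))) \<le> C * r N / D N \<and>
          (\<forall>n. cmod (b N n) \<le> c * (r N)^2)" if "r N * D N \<ge> 1" for N
        using adm'[OF that] b by (auto simp: zero_prod_def)
      have t1: "((\<lambda>N. \<bar>C\<bar> * lg N powr (\<alpha> - \<beta>)) \<longlongrightarrow> 0) sequentially"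
        unfolding lg_def by (intro tendsto_mult_right_zero ln_powr_zero) (use \<beta> in simp)
      have "((\<lambda>N. sqrt (sqrt (V N))) \<longlongrightarrow> sqrt (sqrt 0)) sequentially"
        by (intro tendsto_real_sqrt Vlim)
      then have "((\<lambda>N. sqrt (sqrt (V N))) \<longlongrightarrow> 0) sequentially" by simp
      then have t2: "((\<lambda>N. \<bar>c\<bar> * sqrt (sqrt (V N))) \<longlongrightarrow> 0) sequentially"
        by (rule tendsto_mult_right_zero)
      have e2: "\<epsilon> / 2 > 0" using \<epsilon> by simp
      show "\<forall>\<^sub>F N in sequentially. \<forall>x. \<forall>j\<in>S N.
                cmod (inner_HN N (OpN N (\<kappa> N) (trig_shift (b N) x) (\<phi> N j)) (\<phi> N j)
                      - complex_of_real (torus_vol x (r N))) \<le> \<epsilon> * (r N)^2"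
        using evP order_tendstoD(2)[OF t1 e2] order_tendstoD(2)[OF t2 e2]
      proof eventually_elim
        case (elim N)
        note p = P1[OF elim(1)] and p2 = P2[OF elim(1)]
        note bp = bprop[OF p2(1)]
        have r2: "(r N)^2 > 0" using p(6) by simp
        have cnn: "c * (r N)^2 \<ge> 0" using bp norm_ge_zero order_trans by blast
        show ?case
        proof (intro allI ballI)
          fix x j assume j: "j \<in> S N"
          have j1: "j \<in> {1..N}" and jE: "Ej N j \<le> sqrt (sqrt (V N))" using j unfolding S_def by auto
          have Ej0: "Ej N j \<ge> 0" unfolding Ej_def by (intro sum_nonneg) auto
          have "cmod (inner_HN N (OpN N (\<kappa> N) (trig_shift (b N) x) (\<phi> N j)) (\<phi> N j) - complex_of_real (torus_vol x (r N)))
              \<le> C * r N / D N + c * (r N)^2 * Ej N j"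
            unfolding torus_vol_shift[of x] Ej_def Bx_def
            by (rule err_bound[where Dn = "D N", OF eig[rule_format, OF p(3)] j1]) (use bp in \<open>auto simp: D_def\<close>)
          also have "\<dots> \<le> \<bar>C\<bar> * r N / D N + \<bar>c\<bar> * (r N)^2 * sqrt (sqrt (V N))"
          proof (intro add_mono)
            show "C * r N / D N \<le> \<bar>C\<bar> * r N / D N" using p(6) unfolding D_def
              by (intro divide_right_mono mult_right_mono) auto
            have "c * (r N)^2 * Ej N j \<le> c * (r N)^2 * sqrt (sqrt (V N))"
              using cnn jE by (intro mult_left_mono) auto
            also have "\<dots> \<le> \<bar>c\<bar> * (r N)^2 * sqrt (sqrt (V N))"
              using V0[of N] by (intro mult_right_mono) auto
            finally show "c * (r N)^2 * Ej N j \<le> \<bar>c\<bar> * (r N)^2 * sqrt (sqrt (V N))" .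
          qed
          also have "\<bar>C\<bar> * r N / D N = (r N)^2 * (\<bar>C\<bar> * lg N powr (\<alpha> - \<beta>))"
          proof -
            have "\<bar>C\<bar> * r N / D N = \<bar>C\<bar> * (r N / D N)" by simp
            also have "\<dots> = (r N)^2 * (\<bar>C\<bar> * lg N powr (\<alpha> - \<beta>))" unfolding p2(2) by simp
            finally show ?thesis .
          qed
          also have "\<bar>c\<bar> * (r N)^2 * sqrt (sqrt (V N)) = (r N)^2 * (\<bar>c\<bar> * sqrt (sqrt (V N)))"
            by simp
          also have "(r N)^2 * (\<bar>C\<bar> * lg N powr (\<alpha> - \<beta>)) + (r N)^2 * (\<bar>c\<bar> * sqrt (sqrt (V N)))
              \<le> (r N)^2 * (\<epsilon>/2) + (r N)^2 * (\<epsilon>/2)"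
            using elim(2,3) r2 by (intro add_mono mult_left_mono) auto
          also have "\<dots> = \<epsilon> * (r N)^2" by simp
          finally show "cmod (inner_HN N (OpN N (\<kappa> N) (trig_shift (b N) x) (\<phi> N j)) (\<phi> N j)
                      - complex_of_real (torus_vol x (r N))) \<le> \<epsilon> * (r N)^2" .
        qed
      qed
    qed
  qed
qed

end
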